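(* For every constant $c>0$ there exists a constant $C>0$ such that the following holds. Let $G=(V,E)$ be a $d$-regular undirected graph on $n=|V|$ vertices, $2\le d<n$, which is a $\lambda$ spectral expander with $\lambda>0$ and $n\ge c\,d^3\log(d)/\lambda$. Then the graph code $(\mathrm{enc}_G,\mathrm{dec}_G)$ is an $\varepsilon$-non-malleable code in the split-state model with $\varepsilon\le C\,\frac{\lambda^{3/2}}{d}$. (In the paper's notation: if $n=\Omega(d^3\log(d)/\lambda)$ then the code is $O(\lambda^{3/2}/d)$-non-malleable.)
   Context: $E\subseteq V\times V$ is the symmetric set of ordered pairs of adjacent vertices. $G$ is a $\lambda$ spectral expander if, with $\lambda_1\ge\dots\ge\lambda_n$ the eigenvalues of its adjacency matrix, $\lambda\ge\max\{|\lambda_2|,\dots,|\lambda_n|\}$. The graph code: $\mathrm{enc}_G\colon\{0,1\}\to V\times V$ is randomized, with $\mathrm{enc}_G(0)$ uniform on $(V\times V)\setminus E$ and $\mathrm{enc}_G(1)$ uniform on $E$; $\mathrm{dec}_G(v_1,v_2)=1$ if $(v_1,v_2)\in E$ and $0$ otherwise. Split-state non-malleability: a coding scheme $\mathrm{enc}\colon\mathcal M\to\mathcal L\times\mathcal R$, $\mathrm{dec}\colon\mathcal L\times\mathcal R\to\mathcal M\cup\{\bot\}$ (here $\mathcal M=\{0,1\}$, $\mathcal L=\mathcal R=V$) with $\Pr[\mathrm{dec}(\mathrm{enc}(s))=s]=1$ is $\varepsilon$-non-malleable in the split-state model if for every pair of functions $g\colon\mathcal L\to\mathcal L$, $h\colon\mathcal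 R\to\mathcal R$ there is a distribution $D_{g,h}$ on $\mathcal M\cup\{*,\bot\}$ such that for every $s\in\mathcal M$ the random variable $\mathrm{dec}(g(L),h(R))$ with $(L,R)\leftarrow\mathrm{enc}(s)$ and the random variable obtained by sampling $\tilde s\leftarrow D_{g,h}$ and outputting $s$ if $\tilde s=*$ and $\tilde s$ otherwise, have statistical distance at most $\varepsilon$. *)

theory Defs
  imports "HOL-Probability.Probability" "Jordan_Normal_Form.Char_Poly"
begin

definition undirected_graph :: "nat \<Rightarrow> (nat \<times> nat) set \<Rightarrow> bool" where
  "undirected_graph n E \<longleftrightarrow> E \<subseteq> {0..<n} \<times> {0..<n} \<and> sym E \<and> irrefl E"

definition regular_graph :: "nat \<Rightarrow> nat \<Rightarrow> (nat \<times> nat) set \<Rightarrow> bool" where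
  "regular_graph n d E \<longleftrightarrow> undirected_graph n E \<and> (\<forall>v<n. card {u. (v, u) \<in> E} = d)"

definition adj_matrix :: "nat \<Rightarrow> (nat \<times> nat) set \<Rightarrow> real mat" where
  "adj_matrix n E = mat n n (\<lambda>(i, j). if (i, j) \<in> E then 1 else 0)"

text \<open>The eigenvalues of the adjacency matrix, with multiplicity, listed in
  non-increasing order: lambda_1 >= ... >= lambda_n (they are real, the matrix being
  real symmetric).\<close>
definition adj_eigenvalues :: "nat \<Rightarrow> (nat \<times> nat) set \<Rightarrow> real list \<Rightarrow> bool" where
  "adj_eigenvalues n E es \<longleftrightarrow> length es = n \<and> sorted (rev es) \<and>
     char_poly (adj_matrix n E) = (\<Prod>e\<leftarrow>es. [:- e, 1:])"

text \<open>lambda spectral expander: lambda >= max {|lambda_2|, ..., |lambda_n|}.\<close>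
definition spectral_expander :: "nat \<Rightarrow> (nat \<times> nat) set \<Rightarrow> real \<Rightarrow> bool" where
  "spectral_expander n E lam \<longleftrightarrow>
     (\<exists>es. adj_eigenvalues n E es \<and> (\<forall>i\<in>{1..<n}. \<bar>es ! i\<bar> \<le> lam))"

definition graph_enc :: "nat \<Rightarrow> (nat \<times> nat) set \<Rightarrow> bool \<Rightarrow> (nat \<times> nat) pmf" where
  "graph_enc n E b = (if b then pmf_of_set E else pmf_of_set (({0..<n} \<times> {0..<n}) - E))"

definition graph_dec :: "(nat \<times> nat) set \<Rightarrow> nat \<Rightarrow> nat \<Rightarrow> bool option" where
  "graph_dec E v1 v2 = Some ((v1, v2) \<in> E)"

text \<open>Decoder outputs are 'm option, None standing for \<bottom>. The simulator
  distribution ranges over M \<union> {*, \<bottom>}.\<close>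
datatype 'm nm_out = Msg 'm | Same | Bot

definition stat_dist :: "'a pmf \<Rightarrow> 'a pmf \<Rightarrow> real" where
  "stat_dist p q = (SUP A. \<bar>measure_pmf.prob p A - measure_pmf.prob q A\<bar>)"

definition nm_sim :: "'m \<Rightarrow> 'm nm_out \<Rightarrow> 'm option" where
  "nm_sim s t = (case t of Same \<Rightarrow> Some s | Msg m \<Rightarrow> Some m | Bot \<Rightarrow> None)"

definition split_state_nm ::
  "('m \<Rightarrow> ('l \<times> 'r) pmf) \<Rightarrow> ('l \<Rightarrow> 'r \<Rightarrow> 'm option) \<Rightarrow> 'l set \<Rightarrow> 'r set \<Rightarrow> real \<Rightarrow> bool" where
  "split_state_nm enc dec Ls Rs eps \<longleftrightarrow>
     (\<forall>s. set_pmf (enc s) \<subseteq> Ls \<times> Rs) \<and>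
     (\<forall>s. measure_pmf.prob (enc s) {(l, r). dec l r = Some s} = 1) \<and>
     (\<forall>g \<in> Ls \<rightarrow> Ls. \<forall>h \<in> Rs \<rightarrow> Rs. \<exists>D :: 'm nm_out pmf. \<forall>s.
        stat_dist (map_pmf (\<lambda>(l, r). dec (g l) (h r)) (enc s)) (map_pmf (nm_sim s) D) \<le> eps)"

end

theory Submission
  imports Defs "Jordan_Normal_Form.Schur_Decomposition" "HOL-Analysis.Analysis"
begin


fun fp :: "nat \<Rightarrow> (nat \<Rightarrow> nat \<Rightarrow> real) \<Rightarrow> nat \<Rightarrow> nat \<Rightarrow> nat \<Rightarrow> real" where
  "fp n M 0 i j = (if i = j then 1 else 0)"
| "fp n M (Suc k) i j = (\<Sum>l<n. M i l * fp n M k l j)"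

lemma sum_delta_nat: "(i::nat) < n \<Longrightarrow> (\<Sum>l<n. (if i = l then 1 else 0) * (f l::real)) = f i"
proof -
  assume i: "i < n"
  have "(\<Sum>l<n. (if i = l then 1 else 0) * (f l::real)) = (\<Sum>l\<in>{..<n}. if l = i then f l else 0)"
    by (rule sum.cong, auto)
  also have "\<dots> = f i" using i by simp
  finally show ?thesis .
qed

lemma sum_delta_nat': "(i::nat) < n \<Longrightarrow> (\<Sum>l<n. f l * (if l = i then 1 else 0)) = (f i::real)"
proof -
  assume i: "i < n"
  have "(\<Sum>l<n. f l * (if l = i then 1 else 0)) = (\<Sum>l\<in>{..<n}. if l = i then f l else 0)"
    by (rule sum.cong, auto)
  also have "\<dots> = f i" using i by simp
  finally show ?thesis .
qed

lemma sum_swap3: "(\<Sum>l<n. (a l::real) * (\<Sum>m<n. b l m * c m)) = (\<Sum>m<n. (\<Sum>l<n. a l * b l m) * c m)"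
proof -
  have "(\<Sum>l<n. a l * (\<Sum>m<n. b l m * c m)) = (\<Sum>l<n. \<Sum>m<n. a l * b l m * c m)"
    by (simp add: sum_distrib_left mult.assoc)
  also have "\<dots> = (\<Sum>m<n. \<Sum>l<n. a l * b l m * c m)" by (rule sum.swap)
  also have "\<dots> = (\<Sum>m<n. (\<Sum>l<n. a l * b l m) * c m)"
    by (simp add: sum_distrib_right)
  finally show ?thesis .
qed

lemma fp_add: "i < n \<Longrightarrow> fp n M (a+b) i j = (\<Sum>l<n. fp n M a i l * fp n M b l j)"
proof (induction a arbitrary: i)
  case 0
  then show ?case using sum_delta_nat[of i n "\<lambda>l. fp n M b l j"] by simp
next
  case (Suc a)
  have "fp n M (Suc a + b) i j = (\<Sum>l<n. M i l * fp n M (a+b) l j)" by simp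
  also have "\<dots> = (\<Sum>l<n. M i l * (\<Sum>m<n. fp n M a l m * fp n M b m j))"
    using Suc.IH by simp
  also have "\<dots> = (\<Sum>m<n. (\<Sum>l<n. M i l * fp n M a l m) * fp n M b m j)"
    by (rule sum_swap3)
  finally show ?case by simp
qed

lemma fp_one: "j < n \<Longrightarrow> fp n M 1 l j = M l j"
  using sum_delta_nat'[of j n "M l"] by simp

lemma fp_Suc_right: "i < n \<Longrightarrow> j < n \<Longrightarrow> fp n M (Suc k) i j = (\<Sum>l<n. fp n M k i l * M l j)"
  using fp_add[of i n M k 1 j] fp_one[of j n M] by simp


lemma fp_sym:
  assumes sym: "\<And>i j. i < n \<Longrightarrow> j < n \<Longrightarrow> M i j = M j i"
  shows "i < n \<Longrightarrow> j < n \<Longrightarrow> fp n M k i j = fp n M k j i"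
proof (induction k arbitrary: i j)
  case 0 then show ?case by simp
next
  case (Suc k)
  have "fp n M (Suc k) i j = (\<Sum>l<n. M i l * fp n M k l j)" by simp
  also have "\<dots> = (\<Sum>l<n. fp n M k j l * M l i)"
  proof (rule sum.cong)
    fix l assume l: "l \<in> {..<n}"
    then show "M i l * fp n M k l j = fp n M k j l * M l i"
      using Suc.IH[of l j] sym[of i l] Suc.prems by (simp add: mult.commute)
  qed simp
  also have "\<dots> = fp n M (Suc k) j i" using fp_Suc_right[of j n i M k] Suc.prems by simp
  finally show ?case .
qed

lemma pow_fp:
  assumes A: "A \<in> carrier_mat n n" and i: "i < n" and j: "j < n"
  shows "(A ^\<^sub>m k) $$ (i,j) = fp n (\<lambda>i j. A $$ (i,j)) k i j"
  using j
proof (induction k arbitrary: j)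
  case 0 then show ?case using A i by simp
next
  case (Suc k)
  have "(A ^\<^sub>m Suc k) $$ (i,j) = row (A ^\<^sub>m k) i \<bullet> col A j" using A Suc.prems i by simp
  also have "\<dots> = (\<Sum>l<n. (A ^\<^sub>m k) $$ (i,l) * A $$ (l,j))"
    using A Suc.prems i by (simp add: scalar_prod_def atLeast0LessThan)
  also have "\<dots> = (\<Sum>l<n. fp n (\<lambda>i j. A $$ (i,j)) k i l * A $$ (l,j))"
    using Suc.IH by simp
  also have "\<dots> = fp n (\<lambda>i j. A $$ (i,j)) (Suc k) i j" by (rule fp_Suc_right[symmetric, OF i Suc.prems])
  finally show ?case .
qed

definition mtr :: "nat \<Rightarrow> real mat \<Rightarrow> real" where
  "mtr n M = (\<Sum>i<n. M $$ (i,i))"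

lemma mtr_comm:
  assumes "X \<in> carrier_mat n n" "Y \<in> carrier_mat n n"
  shows "mtr n (X * Y) = mtr n (Y * X)"
proof -
  have "mtr n (X * Y) = (\<Sum>i<n. \<Sum>k<n. X $$ (i,k) * Y $$ (k,i))"
    using assms by (simp add: mtr_def scalar_prod_def atLeast0LessThan)
  also have "\<dots> = (\<Sum>k<n. \<Sum>i<n. Y $$ (k,i) * X $$ (i,k))"
    by (subst sum.swap, simp add: mult.commute)
  also have "\<dots> = mtr n (Y * X)"
    using assms by (simp add: mtr_def scalar_prod_def atLeast0LessThan)
  finally show ?thesis .
qed

lemma upper_pow:
  assumes B: "B \<in> carrier_mat n n" and ut: "upper_triangular B"
  shows "upper_triangular (B ^\<^sub>m k) \<and> (\<forall>i<n. (B ^\<^sub>m k) $$ (i,i) = (B $$ (i,i)) ^ k)"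
proof (induction k)
  case 0 then show ?case using B by (auto simp: upper_triangular_def)
next
  case (Suc k)
  have ut0: "\<And>i j. i < n \<Longrightarrow> j < i \<Longrightarrow> B $$ (i,j) = 0" using ut B by (auto simp: upper_triangular_def)
  have utk: "\<And>i j. i < n \<Longrightarrow> j < i \<Longrightarrow> (B ^\<^sub>m k) $$ (i,j) = 0" using Suc.IH B by (auto simp: upper_triangular_def)
  have idx: "\<And>i j. i < n \<Longrightarrow> j < n \<Longrightarrow> (B ^\<^sub>m Suc k) $$ (i,j) = (\<Sum>l<n. (B ^\<^sub>m k) $$ (i,l) * B $$ (l,j))"
    using B by (simp add: scalar_prod_def atLeast0LessThan)
  have "upper_triangular (B ^\<^sub>m Suc k)"
    unfolding upper_triangular_def
  proof (intro allI impI)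
    fix i j assume i: "i < dim_row (B ^\<^sub>m Suc k)" and j: "j < i"
    have i': "i < n" using i B by simp
    have "(\<Sum>l<n. (B ^\<^sub>m k) $$ (i,l) * B $$ (l,j)) = 0"
    proof (rule sum.neutral, intro ballI)
      fix l assume "l \<in> {..<n}"
      then show "(B ^\<^sub>m k) $$ (i,l) * B $$ (l,j) = 0"
        using utk[of i l] ut0[of l j] i' j by (cases "l < i", auto)
    qed
    then show "(B ^\<^sub>m Suc k) $$ (i,j) = 0" using idx[of i j] i' j by simp
  qed
  moreover have "\<forall>i<n. (B ^\<^sub>m Suc k) $$ (i,i) = (B $$ (i,i)) ^ Suc k"
  proof (intro allI impI)
    fix i assume i: "i < n"
    have "(\<Sum>l<n. (B ^\<^sub>m k) $$ (i,l) * B $$ (l,i)) = (\<Sum>l\<in>{..<n}. if l = i then (B ^\<^sub>m k) $$ (i,i) * B $$ (i,i) else 0)"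
    proof (rule sum.cong)
      fix l assume l: "l \<in> {..<n}"
      show "(B ^\<^sub>m k) $$ (i,l) * B $$ (l,i) = (if l = i then (B ^\<^sub>m k) $$ (i,i) * B $$ (i,i) else 0)"
        using utk[of i l] ut0[of l i] i l by (cases "l < i"; cases "l = i"; auto)
    qed simp
    also have "\<dots> = (B ^\<^sub>m k) $$ (i,i) * B $$ (i,i)" using i by simp
    finally show "(B ^\<^sub>m Suc k) $$ (i,i) = (B $$ (i,i)) ^ Suc k"
      using idx[of i i] i Suc.IH by (metis power_Suc2)
  qed
  ultimately show ?case by blast
qed

lemma trace_pow_eig:
  assumes A: "A \<in> carrier_mat n n" and cp: "char_poly A = (\<Prod>e\<leftarrow>es. [:- e, 1:])"
  shows "mtr n (A ^\<^sub>m k) = (\<Sum>i<n. (es ! i) ^ k)"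
proof -
  obtain B P Q where sd: "schur_decomposition A es = (B,P,Q)" by (cases "schur_decomposition A es", auto)
  from schur_decomposition[OF A cp sd]
  have sw: "similar_mat_wit A B P Q" and ut: "upper_triangular B" and dg: "diag_mat B = es" by auto
  from sw A have B: "B \<in> carrier_mat n n" and P: "P \<in> carrier_mat n n" and Q: "Q \<in> carrier_mat n n"
    and QP: "Q * P = 1\<^sub>m n"
    unfolding similar_mat_wit_def Let_def by auto
  have pw: "A ^\<^sub>m k = P * B ^\<^sub>m k * Q" using similar_mat_wit_pow_id[OF sw] .
  have Bk: "B ^\<^sub>m k \<in> carrier_mat n n" using B by simp
  have "mtr n (A ^\<^sub>m k) = mtr n ((P * B ^\<^sub>m k) * Q)" using pw by simp
  also have "\<dots> = mtr n (Q * (P * B ^\<^sub>m k))" using P Q Bk by (intro mtr_comm, auto)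
  also have "Q * (P * B ^\<^sub>m k) = (Q * P) * B ^\<^sub>m k" using P Q Bk by simp
  also have "\<dots> = B ^\<^sub>m k" using QP left_mult_one_mat[OF Bk] by simp
  also have "mtr n (B ^\<^sub>m k) = (\<Sum>i<n. (B $$ (i,i)) ^ k)"
    unfolding mtr_def using upper_pow[OF B ut, of k] by simp
  also have "\<dots> = (\<Sum>i<n. (es ! i) ^ k)"
    using dg B by (auto simp: diag_mat_def intro!: sum.cong)
  finally show ?thesis .
qed

lemma logconv:
  fixes a :: "nat \<Rightarrow> real"
  assumes nn: "\<And>k. a k \<ge> 0"
    and lc: "\<And>k. (a (Suc k))^2 \<le> a k * a (Suc (Suc k))"
    and bd: "\<And>k. k \<ge> 1 \<Longrightarrow> a k \<le> N * L ^ k * a 0"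
    and N: "N > 0" and L: "L \<ge> 0"
  shows "a 1 \<le> L * a 0"
proof (cases "a 1 = 0")
  case True then show ?thesis using nn[of 0] L by simp
next
  case False
  then have a1: "a 1 > 0" using nn[of 1] by simp
  have "a 1 ^ 2 > 0" using a1 by simp
  then have a0: "a 0 > 0" using lc[of 0] nn[of 0] nn[of 2]
    by (metis One_nat_def less_le_not_le mult_eq_0_iff numeral_2_eq_2 order_le_less)
  define r where "r = a 1 / a 0"
  have r: "r > 0" using a1 a0 by (simp add: r_def)
  have step: "a k > 0 \<and> a (Suc k) \<ge> r * a k" for k
  proof (induction k)
    case 0 then show ?case using a0 by (simp add: r_def)
  next
    case (Suc k)
    have pk: "a k > 0" and ge: "a (Suc k) \<ge> r * a k" using Suc.IH by auto
    have pSk: "a (Suc k) > 0" using ge pk r by (smt (verit) mult_pos_pos)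
    have "a (Suc k) * (r * a k) \<le> a (Suc k) * a (Suc k)"
      using ge pSk by (intro mult_left_mono) auto
    also have "\<dots> \<le> a k * a (Suc (Suc k))" using lc[of k] by (simp add: power2_eq_square)
    finally have "a k * (r * a (Suc k)) \<le> a k * a (Suc (Suc k))" by (simp add: ac_simps)
    then have "r * a (Suc k) \<le> a (Suc (Suc k))" using pk by simp
    then show ?case using pSk by simp
  qed
  have pw: "a k \<ge> r ^ k * a 0" for k
  proof (induction k)
    case 0 then show ?case by simp
  next
    case (Suc k)
    have "r ^ Suc k * a 0 = r * (r ^ k * a 0)" by simp
    also have "\<dots> \<le> r * a k" using Suc.IH r by (intro mult_left_mono) auto
    also have "\<dots> \<le> a (Suc k)" using step[of k] by simp
    finally show ?case .
  qed
  have rk: "r ^ k \<le> N * L ^ k" if "k \<ge> 1" for k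
  proof -
    have "r ^ k * a 0 \<le> N * L ^ k * a 0" using pw[of k] bd[OF that] by simp
    then show ?thesis using a0 by simp
  qed
  have "r \<le> L"
  proof (rule ccontr)
    assume "\<not> r \<le> L"
    then have rL: "r > L" by simp
    show False
    proof (cases "L = 0")
      case True then show False using rk[of 1] r by simp
    next
      case False
      then have Lp: "L > 0" using L by simp
      have "1 < r / L" using rL Lp by simp
      then obtain k where k: "N < (r / L) ^ k" using real_arch_pow by blast
      have "(r / L) ^ k \<le> (r / L) ^ Suc k" using \<open>1 < r / L\<close> by (intro power_increasing) auto
      then have "N < (r / L) ^ Suc k" using k by simp
      then have "N * L ^ Suc k < r ^ Suc k" using Lp by (simp add: power_divide pos_less_divide_eq)
      then show False using rk[of "Suc k"] by simp
    qed
  qed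
  then show ?thesis using a0 by (simp add: r_def divide_le_eq)
qed

lemma fp_cong:
  assumes "\<And>i j. i < n \<Longrightarrow> j < n \<Longrightarrow> M i j = M' i j"
  shows "i < n \<Longrightarrow> fp n M k i j = fp n M' k i j"
proof (induction k arbitrary: i)
  case 0 then show ?case by simp
next
  case (Suc k)
  then show ?case using assms by (auto intro!: sum.cong)
qed

lemma sum_swap3': "(\<Sum>j<n. (\<Sum>l<n. (a l::real) * b l j) * c j) = (\<Sum>l<n. a l * (\<Sum>j<n. b l j * c j))"
  by (rule sum_swap3[symmetric])

lemma sum_prod_shift: "(\<Sum>l<n. ((a l::real) - c) * (b l - c')) = (\<Sum>l<n. a l * b l) - c' * (\<Sum>l<n. a l) - c * (\<Sum>l<n. b l) + real n * c * c'"
proof -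
  have "(\<Sum>l<n. (a l - c) * (b l - c')) = (\<Sum>l<n. a l * b l - c' * a l - c * b l + c * c')"
    by (rule sum.cong) (auto simp: algebra_simps)
  also have "\<dots> = (\<Sum>l<n. a l * b l) - c' * (\<Sum>l<n. a l) - c * (\<Sum>l<n. b l) + real n * c * c'"
    by (simp add: sum.distrib sum_subtractf sum_distrib_left)
  finally show ?thesis .
qed

definition Ad :: "(nat \<times> nat) set \<Rightarrow> nat \<Rightarrow> nat \<Rightarrow> real" where
  "Ad E i j = (if (i,j) \<in> E then 1 else 0)"

lemma Ad_sym: "regular_graph n d E \<Longrightarrow> Ad E i j = Ad E j i"
  unfolding regular_graph_def undirected_graph_def Ad_def sym_def by auto

lemma E_sub: "regular_graph n d E \<Longrightarrow> (i,j) \<in> E \<Longrightarrow> i < n \<and> j < n"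
  unfolding regular_graph_def undirected_graph_def by auto

lemma Ad_nonneg: "Ad E i j \<ge> 0" by (simp add: Ad_def)

lemma row_sum:
  assumes reg: "regular_graph n d E" and i: "i < n"
  shows "(\<Sum>j<n. Ad E i j) = real d"
proof -
  have "(\<Sum>j<n. Ad E i j) = (\<Sum>j\<in>{..<n}. if (i,j) \<in> E then 1 else 0)" by (simp add: Ad_def)
  also have "\<dots> = (\<Sum>j\<in>{j\<in>{..<n}. (i,j) \<in> E}. 1)" by (rule sum.inter_filter[symmetric]) simp
  also have "{j\<in>{..<n}. (i,j) \<in> E} = {u. (i,u) \<in> E}" using E_sub[OF reg] by auto
  also have "(\<Sum>j\<in>{u. (i,u) \<in> E}. (1::real)) = real d"
    using reg i unfolding regular_graph_def by simp
  finally show ?thesis .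
qed

lemma col_sum:
  assumes reg: "regular_graph n d E" and j: "j < n"
  shows "(\<Sum>i<n. Ad E i j) = real d"
  using row_sum[OF reg j] Ad_sym[OF reg] by simp

lemma adj_idx: "i < n \<Longrightarrow> j < n \<Longrightarrow> adj_matrix n E $$ (i,j) = Ad E i j"
  by (simp add: adj_matrix_def Ad_def)

lemma adj_carrier: "adj_matrix n E \<in> carrier_mat n n"
  by (simp add: adj_matrix_def)

lemma eig_abs_le:
  assumes reg: "regular_graph n d E" and ev: "eigenvalue (adj_matrix n E) e"
  shows "\<bar>e\<bar> \<le> real d"
proof -
  let ?A = "adj_matrix n E"
  obtain v where v: "eigenvector ?A v e" using ev unfolding eigenvalue_def by auto
  have vc: "v \<in> carrier_vec n" and v0: "v \<noteq> 0\<^sub>v n" and Av: "?A *\<^sub>v v = e \<cdot>\<^sub>v v"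
    using v adj_carrier[of n E] unfolding eigenvector_def by auto
  have n: "n > 0"
  proof (rule ccontr)
    assume "\<not> n > 0" then have "n = 0" by simp
    then have "v = 0\<^sub>v n" using vc by (intro eq_vecI) auto
    then show False using v0 by simp
  qed
  define S where "S = (\<lambda>j. \<bar>v $ j\<bar>) ` {..<n}"
  have fS: "finite S" and neS: "S \<noteq> {}" using n by (auto simp: S_def)
  obtain i where i: "i < n" and im: "\<bar>v $ i\<bar> = Max S" using Max_in[OF fS neS] by (auto simp: S_def)
  have ge: "\<bar>v $ j\<bar> \<le> \<bar>v $ i\<bar>" if "j < n" for j
    using Max_ge[OF fS, of "\<bar>v $ j\<bar>"] that im by (auto simp: S_def)
  have vi: "\<bar>v $ i\<bar> > 0"
  proof (rule ccontr)
    assume "\<not> \<bar>v $ i\<bar> > 0"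
    then have "\<And>j. j < n \<Longrightarrow> v $ j = 0" using ge by (smt (verit))
    then have "v = 0\<^sub>v n" using vc by (intro eq_vecI) auto
    then show False using v0 by simp
  qed
  have "(?A *\<^sub>v v) $ i = (\<Sum>j<n. Ad E i j * v $ j)"
    using i vc by (simp add: adj_matrix_def scalar_prod_def atLeast0LessThan Ad_def)
  moreover have "(?A *\<^sub>v v) $ i = e * v $ i" using Av i vc by simp
  ultimately have eq: "e * v $ i = (\<Sum>j<n. Ad E i j * v $ j)" by simp
  have "\<bar>e\<bar> * \<bar>v $ i\<bar> = \<bar>\<Sum>j<n. Ad E i j * v $ j\<bar>" by (metis abs_mult eq)
  also have "\<dots> \<le> (\<Sum>j<n. \<bar>Ad E i j * v $ j\<bar>)" by (rule sum_abs)
  also have "\<dots> \<le> (\<Sum>j<n. Ad E i j * \<bar>v $ i\<bar>)"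
    by (rule sum_mono) (auto simp: abs_mult Ad_nonneg intro!: mult_left_mono ge)
  also have "\<dots> = real d * \<bar>v $ i\<bar>" using row_sum[OF reg i] by (simp add: sum_distrib_right[symmetric])
  finally show ?thesis using vi by simp
qed


lemma fp_row_sum:
  assumes reg: "regular_graph n d E"
  shows "i < n \<Longrightarrow> (\<Sum>j<n. fp n (Ad E) k i j) = real d ^ k"
proof (induction k arbitrary: i)
  case 0 then show ?case by simp
next
  case (Suc k)
  have "(\<Sum>j<n. fp n (Ad E) (Suc k) i j) = (\<Sum>j<n. \<Sum>l<n. Ad E i l * fp n (Ad E) k l j)" by simp
  also have "\<dots> = (\<Sum>l<n. Ad E i l * (\<Sum>j<n. fp n (Ad E) k l j))"
    by (subst sum.swap) (simp add: sum_distrib_left)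
  also have "\<dots> = (\<Sum>l<n. Ad E i l * real d ^ k)" using Suc.IH by simp
  also have "\<dots> = real d ^ Suc k" using row_sum[OF reg Suc.prems] by (simp add: sum_distrib_right[symmetric])
  finally show ?case .
qed

lemma fp_col_sum:
  assumes reg: "regular_graph n d E" and j: "j < n"
  shows "(\<Sum>i<n. fp n (Ad E) k i j) = real d ^ k"
proof -
  have "(\<Sum>i<n. fp n (Ad E) k i j) = (\<Sum>i<n. fp n (Ad E) k j i)"
    using fp_sym[of n "Ad E"] Ad_sym[OF reg] j by (auto intro!: sum.cong)
  also have "\<dots> = real d ^ k" using fp_row_sum[OF reg j] .
  finally show ?thesis .
qed

lemma fp_shift:
  assumes reg: "regular_graph n d E" and n: "n > 0"
  shows "i < n \<Longrightarrow> j < n \<Longrightarrow> fp n (\<lambda>i j. Ad E i j - real d / real n) (Suc k) i j = fp n (Ad E) (Suc k) i j - real d ^ Suc k / real n"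
proof (induction k arbitrary: i)
  case 0 then show ?case using fp_one[of j n] by simp
next
  case (Suc k)
  let ?A' = "\<lambda>i j. Ad E i j - real d / real n"
  have "fp n ?A' (Suc (Suc k)) i j = (\<Sum>l<n. ?A' i l * fp n ?A' (Suc k) l j)" by simp
  also have "\<dots> = (\<Sum>l<n. (Ad E i l - real d / real n) * (fp n (Ad E) (Suc k) l j - real d ^ Suc k / real n))"
    using Suc.IH Suc.prems by (auto intro!: sum.cong)
  also have "\<dots> = (\<Sum>l<n. Ad E i l * fp n (Ad E) (Suc k) l j) - real d ^ Suc k / real n * (\<Sum>l<n. Ad E i l)
      - real d / real n * (\<Sum>l<n. fp n (Ad E) (Suc k) l j) + real n * (real d / real n) * (real d ^ Suc k / real n)"
    by (rule sum_prod_shift)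
  also have "\<dots> = (\<Sum>l<n. Ad E i l * fp n (Ad E) (Suc k) l j) - real d ^ Suc k / real n * real d
      - real d / real n * real d ^ Suc k + real n * (real d / real n) * (real d ^ Suc k / real n)"
    by (simp only: row_sum[OF reg Suc.prems(1)] fp_col_sum[OF reg Suc.prems(2)])
  also have "\<dots> = (\<Sum>l<n. Ad E i l * fp n (Ad E) (Suc k) l j) - real d ^ Suc (Suc k) / real n"
  proof -
    have ar: "\<And>S::real. S - real d ^ Suc k / real n * real d
      - real d / real n * real d ^ Suc k + real n * (real d / real n) * (real d ^ Suc k / real n) = S - real d ^ Suc (Suc k) / real n"
      using n by (simp add: field_simps)
    show ?thesis by (rule ar)
  qed
  also have "(\<Sum>l<n. Ad E i l * fp n (Ad E) (Suc k) l j) = fp n (Ad E) (Suc (Suc k)) i j" by simp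
  finally show ?case .
qed

lemma key_norm:
  assumes reg: "regular_graph n d E" and sp: "spectral_expander n E lam" and lam: "lam \<ge> 0" and n: "n > 0"
  shows "(\<Sum>i<n. (\<Sum>j<n. (Ad E i j - real d / real n) * x j)^2) \<le> lam^2 * (\<Sum>j<n. (x j)^2)"
proof -
  obtain es where ae: "adj_eigenvalues n E es" and esb: "\<forall>i\<in>{1..<n}. \<bar>es!i\<bar> \<le> lam"
    using sp unfolding spectral_expander_def by auto
  have len: "length es = n" and cp: "char_poly (adj_matrix n E) = (\<Prod>e\<leftarrow>es. [:-e,1:])"
    using ae unfolding adj_eigenvalues_def by auto
  define A' where "A' = (\<lambda>i j. Ad E i j - real d / real n)"
  have A'sym: "\<And>i j. A' i j = A' j i" using Ad_sym[OF reg] by (simp add: A'_def)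
  have e0: "\<bar>es ! 0\<bar> \<le> real d"
  proof -
    have "es ! 0 \<in> set es" using len n by simp
    then have "poly (char_poly (adj_matrix n E)) (es ! 0) = 0"
      unfolding cp by (auto simp: poly_prod_list prod_list_zero_iff)
    then have "eigenvalue (adj_matrix n E) (es ! 0)"
      using eigenvalue_root_char_poly[OF adj_carrier] by blast
    then show ?thesis by (rule eig_abs_le[OF reg])
  qed
  have trA: "(\<Sum>i<n. fp n (Ad E) m i i) = (\<Sum>i<n. (es ! i) ^ m)" for m
  proof -
    have "(\<Sum>i<n. fp n (Ad E) m i i) = mtr n (adj_matrix n E ^\<^sub>m m)"
      unfolding mtr_def
    proof (rule sum.cong)
      fix i assume i: "i \<in> {..<n}"
      have "(adj_matrix n E ^\<^sub>m m) $$ (i,i) = fp n (\<lambda>i j. adj_matrix n E $$ (i,j)) m i i"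
        using pow_fp[OF adj_carrier] i by simp
      also have "\<dots> = fp n (Ad E) m i i" using fp_cong[of n "\<lambda>i j. adj_matrix n E $$ (i,j)" "Ad E"] adj_idx i by simp
      finally show "fp n (Ad E) m i i = (adj_matrix n E ^\<^sub>m m) $$ (i,i)" by simp
    qed simp
    also have "\<dots> = (\<Sum>i<n. (es ! i) ^ m)" by (rule trace_pow_eig[OF adj_carrier cp])
    finally show ?thesis .
  qed
  have trA': "(\<Sum>i<n. fp n A' (Suc m) i i) \<le> real n * lam ^ Suc m" if ev: "even (Suc m)" for m
  proof -
    have "(\<Sum>i<n. fp n A' (Suc m) i i) = (\<Sum>i<n. fp n (Ad E) (Suc m) i i - real d ^ Suc m / real n)"
      unfolding A'_def using fp_shift[OF reg n] by (auto intro!: sum.cong)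
    also have "\<dots> = (\<Sum>i<n. (es ! i) ^ Suc m) - real d ^ Suc m"
      using n trA[of "Suc m"] by (simp add: sum_subtractf)
    also have "\<dots> \<le> real n * lam ^ Suc m"
    proof -
      obtain n' where n': "n = Suc n'" using n by (cases n) auto
      have "(\<Sum>i<n. (es ! i) ^ Suc m) = (es ! 0) ^ Suc m + (\<Sum>i<n'. (es ! Suc i) ^ Suc m)"
        unfolding n' by (rule sum.lessThan_Suc_shift)
      moreover have "(es ! 0) ^ Suc m \<le> real d ^ Suc m"
      proof -
        have "(es ! 0) ^ Suc m = \<bar>es ! 0\<bar> ^ Suc m" by (rule power_even_abs[symmetric, OF ev])
        also have "\<dots> \<le> real d ^ Suc m" using e0 by (intro power_mono) auto
        finally show ?thesis .
      qed
      moreover have "(\<Sum>i<n'. (es ! Suc i) ^ Suc m) \<le> (\<Sum>i<n'. lam ^ Suc m)"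
      proof (rule sum_mono)
        fix i assume i: "i \<in> {..<n'}"
        have "(es ! Suc i) ^ Suc m = \<bar>es ! Suc i\<bar> ^ Suc m" by (rule power_even_abs[symmetric, OF ev])
        also have "\<dots> \<le> lam ^ Suc m" using esb i n' by (intro power_mono) auto
        finally show "(es ! Suc i) ^ Suc m \<le> lam ^ Suc m" .
      qed
      moreover have "(\<Sum>i<n'. lam ^ Suc m) \<le> real n * lam ^ Suc m"
      proof -
        have "0 \<le> lam ^ Suc m" using lam by simp
        then show ?thesis using n' by (simp add: mult_right_mono)
      qed
      ultimately show ?thesis by linarith
    qed
    finally show ?thesis .
  qed
  define w where "w = (\<lambda>k i. \<Sum>j<n. fp n A' k i j * x j)"
  define a where "a = (\<lambda>k. \<Sum>i<n. (w k i)^2)"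
  have wS: "w (Suc k) i = (\<Sum>l<n. A' i l * w k l)" for k i
    unfolding w_def by (simp add: sum_swap3')
  have a0: "a 0 = (\<Sum>j<n. (x j)^2)"
    unfolding a_def w_def using sum_delta_nat by (auto intro!: sum.cong)
  have a1: "a 1 = (\<Sum>i<n. (\<Sum>j<n. (Ad E i j - real d / real n) * x j)^2)"
  proof -
    have "w 1 i = (\<Sum>j<n. A' i j * x j)" for i
      unfolding w_def using fp_one[of _ n A' i] by (intro sum.cong) (simp_all del: fp.simps)
    then show ?thesis unfolding a_def A'_def by simp
  qed
  have ann: "a k \<ge> 0" for k unfolding a_def by (auto intro: sum_nonneg)
  have lc: "(a (Suc k))^2 \<le> a k * a (Suc (Suc k))" for k
  proof -
    have "a (Suc k) = (\<Sum>i<n. w (Suc k) i * (\<Sum>l<n. A' i l * w k l))"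
      unfolding a_def by (simp add: power2_eq_square wS[of k])
    also have "\<dots> = (\<Sum>l<n. (\<Sum>i<n. w (Suc k) i * A' i l) * w k l)"
      by (rule sum_swap3)
    also have "\<dots> = (\<Sum>l<n. w (Suc (Suc k)) l * w k l)"
      by (simp add: wS A'sym mult.commute)
    finally have "a (Suc k) = (\<Sum>l<n. w (Suc (Suc k)) l * w k l)" .
    then have "(a (Suc k))^2 \<le> (\<Sum>l<n. (w (Suc (Suc k)) l)^2) * (\<Sum>l<n. (w k l)^2)"
      using Cauchy_Schwarz_ineq_sum by simp
    then show ?thesis unfolding a_def by (simp add: mult.commute)
  qed
  have bd: "a k \<le> real n * (lam^2) ^ k * a 0" if k: "k \<ge> 1" for k
  proof -
    have "a k \<le> (\<Sum>i<n. (\<Sum>j<n. (fp n A' k i j)^2) * (\<Sum>j<n. (x j)^2))"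
      unfolding a_def w_def by (rule sum_mono) (rule Cauchy_Schwarz_ineq_sum)
    also have "\<dots> = (\<Sum>i<n. \<Sum>j<n. (fp n A' k i j)^2) * a 0"
      by (simp add: a0 sum_distrib_right)
    also have "(\<Sum>i<n. \<Sum>j<n. (fp n A' k i j)^2) = (\<Sum>i<n. fp n A' (k+k) i i)"
    proof (rule sum.cong)
      fix i assume i: "i \<in> {..<n}"
      show "(\<Sum>j<n. (fp n A' k i j)^2) = fp n A' (k+k) i i"
        using fp_add[of i n A' k k i] fp_sym[of n A' i _ k] A'sym i
        by (auto simp: power2_eq_square intro!: sum.cong)
    qed simp
    also have "\<dots> \<le> real n * lam ^ (k+k)"
    proof -
      obtain m where m: "k + k = Suc m" using k by (cases k) auto
      have "even (Suc m)" using m[symmetric] by simp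
      then show ?thesis using trA'[of m] m by simp
    qed
    finally show ?thesis using ann[of 0] lam
      by (simp add: power_mult[symmetric] mult_2[symmetric] mult_right_mono ac_simps)
  qed
  have "a 1 \<le> lam^2 * a 0"
    by (rule logconv[OF ann lc bd]) (use n in auto)
  then show ?thesis using a0 a1 by simp
qed


lemma abs_sum_cs: "\<bar>\<Sum>i\<in>I. (f i::real) * g i\<bar> \<le> sqrt (\<Sum>i\<in>I. (f i)^2) * sqrt (\<Sum>i\<in>I. (g i)^2)"
proof -
  have "\<bar>\<Sum>i\<in>I. f i * g i\<bar> = sqrt ((\<Sum>i\<in>I. f i * g i)^2)" by simp
  also have "\<dots> \<le> sqrt ((\<Sum>i\<in>I. (f i)^2) * (\<Sum>i\<in>I. (g i)^2))"
    by (rule real_sqrt_le_mono, rule Cauchy_Schwarz_ineq_sum)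
  also have "\<dots> = sqrt (\<Sum>i\<in>I. (f i)^2) * sqrt (\<Sum>i\<in>I. (g i)^2)" by (simp add: real_sqrt_mult)
  finally show ?thesis .
qed

lemma mixing:
  assumes reg: "regular_graph n d E" and sp: "spectral_expander n E lam" and lam: "lam \<ge> 0" and n: "n > 0"
  shows "\<bar>(\<Sum>i<n. \<Sum>j<n. x i * Ad E i j * y j) - real d / real n * (\<Sum>i<n. x i) * (\<Sum>j<n. y j)\<bar>
          \<le> lam * sqrt (\<Sum>i<n. (x i)^2) * sqrt (\<Sum>j<n. (y j)^2)"
proof -
  define z where "z = (\<lambda>i. \<Sum>j<n. (Ad E i j - real d / real n) * y j)"
  have eq: "(\<Sum>i<n. \<Sum>j<n. x i * Ad E i j * y j) - real d / real n * (\<Sum>i<n. x i) * (\<Sum>j<n. y j)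
      = (\<Sum>i<n. x i * z i)"
  proof -
    have "(\<Sum>i<n. x i * z i) = (\<Sum>i<n. \<Sum>j<n. x i * Ad E i j * y j - real d / real n * x i * y j)"
      unfolding z_def by (simp add: sum_distrib_left algebra_simps)
    also have "\<dots> = (\<Sum>i<n. \<Sum>j<n. x i * Ad E i j * y j) - (\<Sum>i<n. \<Sum>j<n. real d / real n * x i * y j)"
      by (simp add: sum_subtractf)
    also have "(\<Sum>i<n. \<Sum>j<n. real d / real n * x i * y j) = real d / real n * (\<Sum>i<n. x i) * (\<Sum>j<n. y j)"
    proof -
      have "(\<Sum>i<n. \<Sum>j<n. real d / real n * x i * y j) = (\<Sum>i<n. real d / real n * x i * (\<Sum>j<n. y j))"
        by (simp only: sum_distrib_left)
      also have "\<dots> = (\<Sum>i<n. real d / real n * x i) * (\<Sum>j<n. y j)" by (simp only: sum_distrib_right)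
      also have "\<dots> = real d / real n * (\<Sum>i<n. x i) * (\<Sum>j<n. y j)" by (simp only: sum_distrib_left)
      finally show ?thesis .
    qed
    finally show ?thesis by simp
  qed
  have c1: "\<bar>\<Sum>i<n. x i * z i\<bar> \<le> sqrt (\<Sum>i<n. (x i)^2) * sqrt (\<Sum>i<n. (z i)^2)" by (rule abs_sum_cs)
  have "sqrt (\<Sum>i<n. (z i)^2) \<le> sqrt (lam^2 * (\<Sum>j<n. (y j)^2))"
    unfolding z_def by (rule real_sqrt_le_mono, rule key_norm[OF reg sp lam n])
  also have "\<dots> = lam * sqrt (\<Sum>j<n. (y j)^2)" using lam by (simp add: real_sqrt_mult)
  finally have c2: "sqrt (\<Sum>i<n. (z i)^2) \<le> lam * sqrt (\<Sum>j<n. (y j)^2)" .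
  have "\<bar>\<Sum>i<n. x i * z i\<bar> \<le> sqrt (\<Sum>i<n. (x i)^2) * (lam * sqrt (\<Sum>j<n. (y j)^2))"
  proof -
    have "0 \<le> sqrt (\<Sum>i<n. (x i)^2)" by (simp add: sum_nonneg)
    then have "sqrt (\<Sum>i<n. (x i)^2) * sqrt (\<Sum>i<n. (z i)^2) \<le> sqrt (\<Sum>i<n. (x i)^2) * (lam * sqrt (\<Sum>j<n. (y j)^2))"
      using c2 by (rule mult_left_mono[rotated])
    then show ?thesis using c1 by linarith
  qed
  then show ?thesis using eq by (simp add: ac_simps)
qed



definition cnt :: "nat \<Rightarrow> (nat \<Rightarrow> nat) \<Rightarrow> nat \<Rightarrow> real" where
  "cnt n g a = (\<Sum>u<n. if g u = a then 1 else 0)"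

lemma cnt_nonneg: "cnt n g a \<ge> 0" unfolding cnt_def by (auto intro: sum_nonneg)

lemma cnt_01: "cnt n g a = 0 \<or> cnt n g a \<ge> 1"
proof (cases "\<exists>u<n. g u = a")
  case True
  then obtain u where u: "u < n" "g u = a" by auto
  have "(if g u = a then 1 else 0) \<le> cnt n g a"
    unfolding cnt_def by (rule member_le_sum) (use u in auto)
  then show ?thesis using u by simp
next
  case False then show ?thesis unfolding cnt_def by (auto intro!: sum.neutral)
qed

lemma sqrt_cnt_le: "sqrt (cnt n g a) \<le> cnt n g a"
proof (cases "cnt n g a = 0")
  case True then show ?thesis by simp
next
  case False
  then have c1: "cnt n g a \<ge> 1" using cnt_01 by blast
  have "sqrt (cnt n g a) \<le> sqrt (cnt n g a * cnt n g a)" using c1 by (intro real_sqrt_le_mono) simp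
  also have "\<dots> = cnt n g a" using c1 by simp
  finally show ?thesis .
qed

lemma fiber1:
  fixes g :: "nat \<Rightarrow> nat"
  assumes hg: "\<And>u. u < n \<Longrightarrow> g u < n"
  shows "(\<Sum>u<n. (F u (g u)::real)) = (\<Sum>a<n. \<Sum>u<n. if g u = a then F u a else 0)"
proof -
  have "(\<Sum>a<n. \<Sum>u<n. if g u = a then F u a else 0) = (\<Sum>u<n. \<Sum>a<n. if g u = a then F u a else 0)"
    by (rule sum.swap)
  also have "\<dots> = (\<Sum>u<n. F u (g u))"
  proof (rule sum.cong)
    fix u assume "u \<in> {..<n}"
    then have "g u \<in> {..<n}" using hg by simp
    then show "(\<Sum>a<n. if g u = a then F u a else 0) = F u (g u)"
      by simp
  qed simp
  finally show ?thesis by simp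
qed

lemma fiber_cnt:
  fixes g :: "nat \<Rightarrow> nat"
  assumes hg: "\<And>u. u < n \<Longrightarrow> g u < n"
  shows "(\<Sum>u<n. (\<phi> (g u)::real)) = (\<Sum>a<n. cnt n g a * \<phi> a)"
proof -
  have "(\<Sum>u<n. \<phi> (g u)) = (\<Sum>a<n. \<Sum>u<n. if g u = a then \<phi> a else 0)"
    using fiber1[of n g "\<lambda>u a. \<phi> a", OF hg] by simp
  also have "\<dots> = (\<Sum>a<n. cnt n g a * \<phi> a)"
    unfolding cnt_def sum_distrib_right by (intro sum.cong) auto
  finally show ?thesis .
qed

lemma cnt_sum:
  fixes g :: "nat \<Rightarrow> nat"
  assumes hg: "\<And>u. u < n \<Longrightarrow> g u < n"
  shows "(\<Sum>a<n. cnt n g a) = real n"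
  using fiber_cnt[of n g "\<lambda>_. 1", OF hg] by simp

lemma fiber2:
  fixes g h :: "nat \<Rightarrow> nat"
  assumes hg: "\<And>u. u < n \<Longrightarrow> g u < n" and hh: "\<And>u. u < n \<Longrightarrow> h u < n"
  shows "(\<Sum>u<n. \<Sum>v<n. (\<psi> (g u) (h v)::real)) = (\<Sum>a<n. \<Sum>b<n. cnt n g a * \<psi> a b * cnt n h b)"
proof -
  have "(\<Sum>u<n. \<Sum>v<n. \<psi> (g u) (h v)) = (\<Sum>u<n. \<Sum>b<n. cnt n h b * \<psi> (g u) b)"
    using fiber_cnt[of n h, OF hh] by simp
  also have "\<dots> = (\<Sum>a<n. cnt n g a * (\<Sum>b<n. cnt n h b * \<psi> a b))"
    by (rule fiber_cnt[OF hg])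
  also have "\<dots> = (\<Sum>a<n. \<Sum>b<n. cnt n g a * \<psi> a b * cnt n h b)"
    by (simp add: sum_distrib_left ac_simps)
  finally show ?thesis .
qed

lemma bil_alg:
  "(\<Sum>u<n. \<Sum>v<n. (x u::real) * y v * (c - M u v)) = c * (\<Sum>u<n. x u) * (\<Sum>v<n. y v) - (\<Sum>u<n. \<Sum>v<n. x u * M u v * y v)"
proof -
  have "(\<Sum>u<n. \<Sum>v<n. x u * y v * (c - M u v)) = (\<Sum>u<n. \<Sum>v<n. c * x u * y v - x u * M u v * y v)"
    by (simp add: algebra_simps)
  also have "\<dots> = (\<Sum>u<n. \<Sum>v<n. c * x u * y v) - (\<Sum>u<n. \<Sum>v<n. x u * M u v * y v)"
    by (simp add: sum_subtractf)
  also have "(\<Sum>u<n. \<Sum>v<n. c * x u * y v) = c * (\<Sum>u<n. x u) * (\<Sum>v<n. y v)"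
  proof -
    have "(\<Sum>u<n. \<Sum>v<n. c * x u * y v) = (\<Sum>u<n. c * x u * (\<Sum>v<n. y v))"
      by (simp only: sum_distrib_left)
    also have "\<dots> = (\<Sum>u<n. c * x u) * (\<Sum>v<n. y v)" by (simp only: sum_distrib_right)
    also have "\<dots> = c * (\<Sum>u<n. x u) * (\<Sum>v<n. y v)" by (simp only: sum_distrib_left)
    finally show ?thesis .
  qed
  finally show ?thesis .
qed

lemma mix_upper:
  assumes reg: "regular_graph n d E" and sp: "spectral_expander n E lam" and lam: "lam \<ge> 0" and n: "n > 0"
  shows "(\<Sum>i<n. \<Sum>j<n. x i * Ad E i j * y j) \<le> real d / real n * (\<Sum>i<n. x i) * (\<Sum>j<n. y j)
          + lam * sqrt (\<Sum>i<n. (x i)^2) * sqrt (\<Sum>j<n. (y j)^2)"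
  using mixing[OF reg sp lam n, where x=x and y=y] by linarith

lemma mix_lower:
  assumes reg: "regular_graph n d E" and sp: "spectral_expander n E lam" and lam: "lam \<ge> 0" and n: "n > 0"
  shows "(\<Sum>u<n. \<Sum>v<n. x u * y v * (real d / real n - Ad E u v))
          \<le> lam * sqrt (\<Sum>i<n. (x i)^2) * sqrt (\<Sum>j<n. (y j)^2)"
  using mixing[OF reg sp lam n, where x=x and y=y] bil_alg[where n=n and x=x and y=y and c="real d / real n" and M="Ad E"] by linarith


lemma Ad_01: "Ad E i j = 0 \<or> Ad E i j = 1" by (simp add: Ad_def)
lemma Ad_sq: "(Ad E i j)^2 = Ad E i j" by (simp add: Ad_def)
lemma Ad_le1: "Ad E i j \<le> 1" by (simp add: Ad_def)

lemma LL_bound: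
  fixes g h :: "nat \<Rightarrow> nat"
  assumes reg: "regular_graph n d E" and sp: "spectral_expander n E lam" and lam: "lam > 0" and n: "n > 0"
    and hg: "\<And>u. u < n \<Longrightarrow> g u < n" and hh: "\<And>u. u < n \<Longrightarrow> h u < n" and T0: "T0 \<ge> 0"
  shows "(\<Sum>u<n. \<Sum>v<n. (if cnt n g (g u) \<le> T0 \<and> cnt n h (h v) \<le> T0 then Ad E (g u) (h v) * (real d / real n - Ad E u v) else 0))
     \<le> real d ^ 2 + real d * lam * T0"
proof -
  define c where "c = real d / real n"
  have c0: "c \<ge> 0" by (simp add: c_def)
  define \<psi> where "\<psi> = (\<lambda>a b. if cnt n g a \<le> T0 \<and> cnt n h b \<le> T0 then Ad E a b else 0)"
  define x where "x = (\<lambda>a. if cnt n g a \<le> T0 then cnt n g a else 0)"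
  define y where "y = (\<lambda>b. if cnt n h b \<le> T0 then cnt n h b else 0)"
  have "(\<Sum>u<n. \<Sum>v<n. (if cnt n g (g u) \<le> T0 \<and> cnt n h (h v) \<le> T0 then Ad E (g u) (h v) * (c - Ad E u v) else 0))
      \<le> (\<Sum>u<n. \<Sum>v<n. c * \<psi> (g u) (h v))"
    unfolding \<psi>_def using c0
    by (intro sum_mono) (auto simp: Ad_nonneg algebra_simps mult_nonneg_nonneg)
  also have "\<dots> = c * (\<Sum>u<n. \<Sum>v<n. \<psi> (g u) (h v))" by (simp add: sum_distrib_left)
  also have "(\<Sum>u<n. \<Sum>v<n. \<psi> (g u) (h v)) = (\<Sum>a<n. \<Sum>b<n. cnt n g a * \<psi> a b * cnt n h b)"
    by (rule fiber2[OF hg hh])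
  also have "\<dots> = (\<Sum>a<n. \<Sum>b<n. x a * Ad E a b * y b)"
    unfolding \<psi>_def x_def y_def by (intro sum.cong) auto
  also have "\<dots> \<le> real d / real n * (\<Sum>a<n. x a) * (\<Sum>b<n. y b) + lam * sqrt (\<Sum>a<n. (x a)^2) * sqrt (\<Sum>b<n. (y b)^2)"
    by (rule mix_upper[OF reg sp _ n]) (use lam in simp)
  finally have st: "(\<Sum>u<n. \<Sum>v<n. (if cnt n g (g u) \<le> T0 \<and> cnt n h (h v) \<le> T0 then Ad E (g u) (h v) * (c - Ad E u v) else 0))
      \<le> c * (real d / real n * (\<Sum>a<n. x a) * (\<Sum>b<n. y b) + lam * sqrt (\<Sum>a<n. (x a)^2) * sqrt (\<Sum>b<n. (y b)^2))"
    using c0 by (simp add: mult_left_mono)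
  have x0: "0 \<le> (\<Sum>a<n. x a)" and y0: "0 \<le> (\<Sum>b<n. y b)"
    unfolding x_def y_def by (auto intro!: sum_nonneg simp: cnt_nonneg)
  have xn: "(\<Sum>a<n. x a) \<le> real n"
  proof -
    have "(\<Sum>a<n. x a) \<le> (\<Sum>a<n. cnt n g a)" unfolding x_def by (intro sum_mono) (auto simp: cnt_nonneg)
    then show ?thesis using cnt_sum[OF hg] by simp
  qed
  have yn: "(\<Sum>b<n. y b) \<le> real n"
  proof -
    have "(\<Sum>b<n. y b) \<le> (\<Sum>b<n. cnt n h b)" unfolding y_def by (intro sum_mono) (auto simp: cnt_nonneg)
    then show ?thesis using cnt_sum[OF hh] by simp
  qed
  have xx: "(\<Sum>a<n. (x a)^2) \<le> T0 * real n"
  proof -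
    have "(\<Sum>a<n. (x a)^2) \<le> (\<Sum>a<n. T0 * cnt n g a)"
      unfolding x_def by (intro sum_mono) (auto simp: power2_eq_square cnt_nonneg mult_right_mono T0)
    then show ?thesis using cnt_sum[OF hg] by (simp add: sum_distrib_left[symmetric])
  qed
  have yy: "(\<Sum>b<n. (y b)^2) \<le> T0 * real n"
  proof -
    have "(\<Sum>b<n. (y b)^2) \<le> (\<Sum>b<n. T0 * cnt n h b)"
      unfolding y_def by (intro sum_mono) (auto simp: power2_eq_square cnt_nonneg mult_right_mono T0)
    then show ?thesis using cnt_sum[OF hh] by (simp add: sum_distrib_left[symmetric])
  qed
  have p1: "real d / real n * (\<Sum>a<n. x a) * (\<Sum>b<n. y b) \<le> real d / real n * real n * real n"
  proof -
    have "(\<Sum>a<n. x a) * (\<Sum>b<n. y b) \<le> real n * real n" using x0 y0 xn yn by (intro mult_mono) auto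
    then have "real d / real n * ((\<Sum>a<n. x a) * (\<Sum>b<n. y b)) \<le> real d / real n * (real n * real n)"
      by (rule mult_left_mono) simp
    then show ?thesis by (metis mult.assoc)
  qed
  have p2: "sqrt (\<Sum>a<n. (x a)^2) * sqrt (\<Sum>b<n. (y b)^2) \<le> T0 * real n"
  proof -
    have "sqrt (\<Sum>a<n. (x a)^2) * sqrt (\<Sum>b<n. (y b)^2) \<le> sqrt (T0 * real n) * sqrt (T0 * real n)"
      using xx yy T0 by (intro mult_mono real_sqrt_le_mono) (auto intro!: sum_nonneg)
    also have "\<dots> = T0 * real n" using T0 by simp
    finally show ?thesis .
  qed
  have "real d / real n * (\<Sum>a<n. x a) * (\<Sum>b<n. y b) + lam * sqrt (\<Sum>a<n. (x a)^2) * sqrt (\<Sum>b<n. (y b)^2)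
      \<le> real d / real n * real n * real n + lam * (T0 * real n)"
    using p1 p2 lam by (smt (verit, best) mult.assoc mult_left_mono)
  then have "c * (real d / real n * (\<Sum>a<n. x a) * (\<Sum>b<n. y b) + lam * sqrt (\<Sum>a<n. (x a)^2) * sqrt (\<Sum>b<n. (y b)^2))
      \<le> c * (real d / real n * real n * real n + lam * (T0 * real n))"
    using c0 by (rule mult_left_mono)
  also have "\<dots> = real d ^ 2 + real d * lam * T0" using n by (simp add: c_def field_simps power2_eq_square)
  finally show ?thesis using st unfolding c_def by linarith
qed


lemma RR_bound:
  fixes g h :: "nat \<Rightarrow> nat"
  assumes reg: "regular_graph n d E" and sp: "spectral_expander n E lam" and lam: "lam > 0" and n: "n > 0"
    and hg: "\<And>u. u < n \<Longrightarrow> g u < n" and hh: "\<And>u. u < n \<Longrightarrow> h u < n" and T0: "T0 > 0"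
    and Phi: "\<And>a b. Phi a b \<Longrightarrow> cnt n g a > T0 \<and> cnt n h b \<le> cnt n g a"
  shows "(\<Sum>u<n. \<Sum>v<n. (if Phi (g u) (h v) then Ad E (g u) (h v) * (real d / real n - Ad E u v) else 0))
     \<le> lam * sqrt (real n) * sqrt (real d * real n / sqrt T0 + lam * real n)"
proof -
  define c where "c = real d / real n"
  define s where "s = cnt n g"
  define t where "t = cnt n h"
  have s0: "\<And>a. s a \<ge> 0" and t0: "\<And>b. t b \<ge> 0" by (simp_all add: s_def t_def cnt_nonneg)
  have ssum: "(\<Sum>a<n. s a) = real n" and tsum: "(\<Sum>b<n. t b) = real n"
    using cnt_sum[OF hg] cnt_sum[OF hh] by (simp_all add: s_def t_def)
  define F where "F = (\<lambda>u a. \<Sum>v<n. (if Phi a (h v) then Ad E a (h v) * (c - Ad E u v) else 0))"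
  define Y where "Y = (\<lambda>a. \<Sum>v<n. (if Phi a (h v) then Ad E a (h v) else 0))"
  have Y0: "\<And>a. Y a \<ge> 0" unfolding Y_def by (auto intro!: sum_nonneg simp: Ad_nonneg)
  have "(\<Sum>u<n. \<Sum>v<n. (if Phi (g u) (h v) then Ad E (g u) (h v) * (c - Ad E u v) else 0))
      = (\<Sum>u<n. F u (g u))" unfolding F_def by simp
  also have "\<dots> = (\<Sum>a<n. \<Sum>u<n. if g u = a then F u a else 0)" by (rule fiber1[OF hg])
  also have "\<dots> \<le> (\<Sum>a<n. lam * sqrt (s a) * sqrt (Y a))"
  proof (rule sum_mono)
    fix a assume a: "a \<in> {..<n}"
    define xa where "xa = (\<lambda>u. if g u = a then 1 else (0::real))"
    define ya where "ya = (\<lambda>v. if Phi a (h v) then Ad E a (h v) else 0)"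
    have "(\<Sum>u<n. if g u = a then F u a else 0) = (\<Sum>u<n. \<Sum>v<n. xa u * ya v * (c - Ad E u v))"
      unfolding F_def xa_def ya_def by (intro sum.cong) (auto intro!: sum.cong)
    also have "\<dots> \<le> lam * sqrt (\<Sum>u<n. (xa u)^2) * sqrt (\<Sum>v<n. (ya v)^2)"
      unfolding c_def by (rule mix_lower[OF reg sp _ n]) (use lam in simp)
    also have "(\<Sum>u<n. (xa u)^2) = s a" unfolding xa_def s_def cnt_def by (intro sum.cong) auto
    also have "(\<Sum>v<n. (ya v)^2) = Y a" unfolding ya_def Y_def by (intro sum.cong) (auto simp: Ad_sq)
    finally show "(\<Sum>u<n. if g u = a then F u a else 0) \<le> lam * sqrt (s a) * sqrt (Y a)" .
  qed
  also have "\<dots> = lam * (\<Sum>a<n. sqrt (s a) * sqrt (Y a))" by (simp add: sum_distrib_left mult.assoc)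
  also have "\<dots> \<le> lam * (sqrt (real n) * sqrt (\<Sum>a<n. Y a))"
  proof -
    have "(\<Sum>a<n. sqrt (s a) * sqrt (Y a)) \<le> \<bar>\<Sum>a<n. sqrt (s a) * sqrt (Y a)\<bar>" by simp
    also have "\<dots> \<le> sqrt (\<Sum>a<n. (sqrt (s a))^2) * sqrt (\<Sum>a<n. (sqrt (Y a))^2)" by (rule abs_sum_cs)
    also have "\<dots> = sqrt (real n) * sqrt (\<Sum>a<n. Y a)" using s0 Y0 ssum by simp
    finally show ?thesis using lam by (simp add: mult_left_mono)
  qed
  also have "(\<Sum>a<n. Y a) \<le> real d * real n / sqrt T0 + lam * real n"
  proof -
    define X where "X = (\<lambda>a. if s a > T0 then sqrt (s a) else 0)"
    define Z where "Z = (\<lambda>b. sqrt (t b))"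
    have X0: "\<And>a. X a \<ge> 0" and Z0: "\<And>b. Z b \<ge> 0" using s0 t0 by (simp_all add: X_def Z_def)
    have "(\<Sum>a<n. Y a) = (\<Sum>a<n. \<Sum>b<n. t b * (if Phi a b then Ad E a b else 0))"
      unfolding Y_def t_def by (intro sum.cong refl fiber_cnt[OF hh])
    also have "\<dots> \<le> (\<Sum>a<n. \<Sum>b<n. X a * Ad E a b * Z b)"
    proof (intro sum_mono)
      fix a b
      show "t b * (if Phi a b then Ad E a b else 0) \<le> X a * Ad E a b * Z b"
      proof (cases "Phi a b")
        case True
        then have st: "s a > T0" "t b \<le> s a" using Phi by (auto simp: s_def t_def)
        have "t b = sqrt (t b) * sqrt (t b)" using t0 by simp
        also have "\<dots> \<le> sqrt (s a) * sqrt (t b)" using st(2) t0 by (intro mult_right_mono real_sqrt_le_mono) auto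
        finally have "t b \<le> sqrt (s a) * sqrt (t b)" .
        then have "t b * Ad E a b \<le> sqrt (s a) * sqrt (t b) * Ad E a b" by (rule mult_right_mono) (simp add: Ad_nonneg)
        then show ?thesis using True st by (simp add: X_def Z_def ac_simps)
      next
        case False then show ?thesis using X0 Z0 by (simp add: Ad_nonneg)
      qed
    qed
    also have "\<dots> \<le> real d / real n * (\<Sum>a<n. X a) * (\<Sum>b<n. Z b) + lam * sqrt (\<Sum>a<n. (X a)^2) * sqrt (\<Sum>b<n. (Z b)^2)"
      by (rule mix_upper[OF reg sp _ n]) (use lam in simp)
    also have "\<dots> \<le> real d / real n * (real n / sqrt T0) * real n + lam * sqrt (real n) * sqrt (real n)"
    proof -
      have SX: "(\<Sum>a<n. X a) \<le> real n / sqrt T0"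
      proof -
        have "(\<Sum>a<n. X a) \<le> (\<Sum>a<n. s a / sqrt T0)"
        proof (rule sum_mono)
          fix a
          show "X a \<le> s a / sqrt T0"
          proof (cases "s a > T0")
            case True
            have "sqrt (s a) * sqrt T0 \<le> sqrt (s a) * sqrt (s a)"
              using True T0 by (intro mult_left_mono real_sqrt_le_mono) auto
            also have "\<dots> = s a" using s0 by simp
            finally show ?thesis using True T0 by (simp add: X_def pos_le_divide_eq)
          next
            case False then show ?thesis using s0 T0 by (simp add: X_def)
          qed
        qed
        also have "\<dots> = real n / sqrt T0" using ssum by (simp add: sum_divide_distrib[symmetric])
        finally show ?thesis .
      qed
      have SZ: "(\<Sum>b<n. Z b) \<le> real n"
      proof -
        have "(\<Sum>b<n. Z b) \<le> (\<Sum>b<n. t b)" unfolding Z_def t_def by (intro sum_mono sqrt_cnt_le)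
        then show ?thesis using tsum by simp
      qed
      have SXX: "(\<Sum>a<n. (X a)^2) \<le> real n"
      proof -
        have "(\<Sum>a<n. (X a)^2) \<le> (\<Sum>a<n. s a)" unfolding X_def using s0 by (intro sum_mono) auto
        then show ?thesis using ssum by simp
      qed
      have SZZ: "(\<Sum>b<n. (Z b)^2) = real n" unfolding Z_def using t0 tsum by simp
      have "(\<Sum>a<n. X a) * (\<Sum>b<n. Z b) \<le> (real n / sqrt T0) * real n"
        using SX SZ X0 Z0 T0 by (intro mult_mono) (auto intro: sum_nonneg)
      then have A1: "real d / real n * (\<Sum>a<n. X a) * (\<Sum>b<n. Z b) \<le> real d / real n * (real n / sqrt T0) * real n"
        by (metis mult.assoc mult_left_mono of_nat_0_le_iff divide_nonneg_nonneg)
      have "sqrt (\<Sum>a<n. (X a)^2) * sqrt (\<Sum>b<n. (Z b)^2) \<le> sqrt (real n) * sqrt (real n)"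
        using SXX SZZ by (intro mult_mono real_sqrt_le_mono) auto
      then have A2: "lam * sqrt (\<Sum>a<n. (X a)^2) * sqrt (\<Sum>b<n. (Z b)^2) \<le> lam * sqrt (real n) * sqrt (real n)"
        using lam by (metis mult.assoc mult_left_mono less_imp_le)
      show ?thesis using A1 A2 by linarith
    qed
    also have "\<dots> = real d * real n / sqrt T0 + lam * real n" using n by simp
    finally show ?thesis .
  qed
  then have "lam * (sqrt (real n) * sqrt (\<Sum>a<n. Y a)) \<le> lam * (sqrt (real n) * sqrt (real d * real n / sqrt T0 + lam * real n))"
    using lam by (intro mult_left_mono real_sqrt_le_mono) auto
  finally show ?thesis unfolding c_def by (simp add: mult.assoc)
qed


lemma total_bound:
  fixes g h :: "nat \<Rightarrow> nat"
  assumes reg: "regular_graph n d E" and sp: "spectral_expander n E lam" and lam: "lam > 0" and n: "n > 0"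
    and hg: "\<And>u. u < n \<Longrightarrow> g u < n" and hh: "\<And>u. u < n \<Longrightarrow> h u < n" and d: "d > 0"
  shows "(\<Sum>u<n. \<Sum>v<n. Ad E (g u) (h v) * (real d / real n - Ad E u v))
     \<le> real d ^ 2 + real d ^ 3 / lam + 2 * (lam * real n * sqrt (2 * lam))"
proof -
  define T0 where "T0 = real d ^ 2 / lam ^ 2"
  have T0p: "T0 > 0" using d lam by (simp add: T0_def)
  have sT0: "sqrt T0 = real d / lam" using lam d by (simp add: T0_def real_sqrt_divide)
  define c where "c = real d / real n"
  define LL where "LL = (\<lambda>a b. cnt n g a \<le> T0 \<and> cnt n h b \<le> T0)"
  define RR where "RR = (\<lambda>a b. \<not> LL a b \<and> cnt n h b \<le> cnt n g a)"
  define CC where "CC = (\<lambda>a b. \<not> LL a b \<and> \<not> cnt n h b \<le> cnt n g a)"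
  define G where "G = (\<lambda>P. \<Sum>u<n. \<Sum>v<n. (if P (g u) (h v) then Ad E (g u) (h v) * (c - Ad E u v) else 0))"
  have split: "(\<Sum>u<n. \<Sum>v<n. Ad E (g u) (h v) * (c - Ad E u v)) = G LL + G RR + G CC"
  proof -
    have pt: "Ad E (g u) (h v) * (c - Ad E u v) = (if LL (g u) (h v) then Ad E (g u) (h v) * (c - Ad E u v) else 0)
       + (if RR (g u) (h v) then Ad E (g u) (h v) * (c - Ad E u v) else 0)
       + (if CC (g u) (h v) then Ad E (g u) (h v) * (c - Ad E u v) else 0)" for u v
      unfolding RR_def CC_def by auto
    have "G LL + G RR + G CC = (\<Sum>u<n. \<Sum>v<n. (if LL (g u) (h v) then Ad E (g u) (h v) * (c - Ad E u v) else 0)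
       + (if RR (g u) (h v) then Ad E (g u) (h v) * (c - Ad E u v) else 0)
       + (if CC (g u) (h v) then Ad E (g u) (h v) * (c - Ad E u v) else 0))"
      unfolding G_def by (simp only: sum.distrib)
    also have "\<dots> = (\<Sum>u<n. \<Sum>v<n. Ad E (g u) (h v) * (c - Ad E u v))"
      by (intro sum.cong refl) (rule pt[symmetric])
    finally show ?thesis by simp
  qed
  have bLL: "G LL \<le> real d ^ 2 + real d * lam * T0"
    unfolding G_def LL_def c_def by (rule LL_bound[OF reg sp lam n hg hh less_imp_le[OF T0p]])
  have key: "lam * sqrt (real n) * sqrt (real d * real n / sqrt T0 + lam * real n) = lam * real n * sqrt (2 * lam)"
  proof -
    have "real d * real n / sqrt T0 + lam * real n = real n * (2 * lam)" using d lam by (simp add: sT0 field_simps)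
    then show ?thesis using n by (simp add: real_sqrt_mult)
  qed
  have bRR: "G RR \<le> lam * real n * sqrt (2 * lam)"
  proof -
    have "G RR \<le> lam * sqrt (real n) * sqrt (real d * real n / sqrt T0 + lam * real n)"
      unfolding G_def c_def
      by (rule RR_bound[OF reg sp lam n hg hh T0p]) (auto simp: RR_def LL_def)
    then show ?thesis using key by simp
  qed
  have bCC: "G CC \<le> lam * real n * sqrt (2 * lam)"
  proof -
    define Phi where "Phi = (\<lambda>b a. CC a b)"
    have "G CC = (\<Sum>v<n. \<Sum>u<n. (if CC (g u) (h v) then Ad E (g u) (h v) * (c - Ad E u v) else 0))"
      unfolding G_def by (rule sum.swap)
    also have "\<dots> = (\<Sum>v<n. \<Sum>u<n. (if Phi (h v) (g u) then Ad E (h v) (g u) * (c - Ad E v u) else 0))"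
      unfolding Phi_def
    proof (intro sum.cong refl)
      fix u v
      show "(if CC (g u) (h v) then Ad E (g u) (h v) * (c - Ad E u v) else 0)
        = (if CC (g u) (h v) then Ad E (h v) (g u) * (c - Ad E v u) else 0)"
        using Ad_sym[OF reg, of "g u" "h v"] Ad_sym[OF reg, of u v] by simp
    qed
    also have "\<dots> \<le> lam * sqrt (real n) * sqrt (real d * real n / sqrt T0 + lam * real n)"
      unfolding c_def
      by (rule RR_bound[OF reg sp lam n hh hg T0p]) (auto simp: Phi_def CC_def LL_def)
    finally show ?thesis using key by simp
  qed
  have "real d * lam * T0 = real d ^ 3 / lam" using lam by (simp add: T0_def field_simps power2_eq_square power3_eq_cube)
  then show ?thesis using split bLL bRR bCC unfolding c_def by linarith
qed



lemma powr32: "(x::real) > 0 \<Longrightarrow> x powr (3/2) = x * sqrt x"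
proof -
  assume x: "x > 0"
  have "x powr (3/2) = x powr (1 + 1/2)" by simp
  also have "\<dots> = x powr 1 * x powr (1/2)" by (rule powr_add)
  also have "\<dots> = x * sqrt x" using x by (simp add: powr_half_sqrt)
  finally show ?thesis .
qed

lemma ln_ge_half: "real d \<ge> 2 \<Longrightarrow> ln (real d) \<ge> 1/2"
proof -
  assume d: "real d \<ge> 2"
  have "ln (1/2::real) \<le> 1/2 - 1" by (rule ln_le_minus_one) simp
  then have "ln (2::real) \<ge> 1/2" by (simp add: ln_div)
  moreover have "ln (2::real) \<le> ln (real d)" using d by simp
  ultimately show ?thesis by linarith
qed

lemma prob_map_bool:
  fixes S F :: "'a set"
  assumes S: "finite S" "S \<noteq> {}"
  shows "measure_pmf.prob (map_pmf (\<lambda>x. Some (x \<in> F)) (pmf_of_set S)) A =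
    (if Some True \<in> A then real (card (S \<inter> F)) / real (card S) else 0) +
    (if Some False \<in> A then 1 - real (card (S \<inter> F)) / real (card S) else 0)"
proof -
  have cS: "real (card S) > 0" using S by (simp add: card_gt_0_iff)
  have le: "card (S \<inter> F) \<le> card S" using S by (intro card_mono) auto
  have pre: "S \<inter> (\<lambda>x. Some (x \<in> F)) -` A =
     (if Some True \<in> A then S \<inter> F else {}) \<union> (if Some False \<in> A then S - F else {})"
  proof (rule Set.set_eqI)
    fix x show "x \<in> S \<inter> (\<lambda>x. Some (x \<in> F)) -` A \<longleftrightarrow>
      x \<in> (if Some True \<in> A then S \<inter> F else {}) \<union> (if Some False \<in> A then S - F else {})"
      by (cases "x \<in> F") auto
  qed
  have diff: "real (card (S - F)) = real (card S) - real (card (S \<inter> F))"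
    using S le by (simp add: card_Diff_subset_Int of_nat_diff)
  have cases: "real (card (S \<inter> (\<lambda>x. Some (x \<in> F)) -` A)) =
     (if Some True \<in> A then real (card (S \<inter> F)) else 0) + (if Some False \<in> A then real (card (S - F)) else 0)"
  proof -
    have disj: "(S \<inter> F) \<inter> (S - F) = {}" by auto
    show ?thesis unfolding pre using S disj
      by (auto simp: card_Un_disjoint)
  qed
  show ?thesis
    using S cS unfolding measure_map_pmf
    by (simp add: measure_pmf_of_set cases diff field_simps)
qed

lemma prob_D:
  assumes m: "0 \<le> m" "m \<le> p" "p \<le> 1"
  shows "measure_pmf.prob (map_pmf (nm_sim s) (pmf_of_list [(Msg True, m), (Same, p - m), (Msg False, 1 - p)])) A =
    (if nm_sim s (Msg True) \<in> A then m else 0) + (if nm_sim s Same \<in> A then p - m else 0) +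
    (if nm_sim s (Msg False) \<in> A then 1 - p else 0)"
proof -
  have wf: "pmf_of_list_wf [(Msg True, m), (Same, p - m), (Msg False, 1 - p)]"
    using m by (simp add: pmf_of_list_wf_def)
  show ?thesis unfolding measure_map_pmf using measure_pmf_of_list[OF wf] by simp
qed

lemma stat_dist_le:
  assumes "\<And>A. \<bar>measure_pmf.prob P A - measure_pmf.prob Q A\<bar> \<le> \<delta>"
  shows "stat_dist P Q \<le> \<delta>"
  unfolding stat_dist_def by (rule cSUP_least) (auto intro: assms)

lemma card_sum:
  fixes n :: nat
  assumes T: "T \<subseteq> {..<n} \<times> {..<n}"
  shows "real (card T) = (\<Sum>u<n. \<Sum>v<n. if (u,v) \<in> T then 1 else 0)"
proof -
  have fin: "finite ({..<n} \<times> {..<n})" by simp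
  have "real (card T) = (\<Sum>x\<in>T. 1)" by simp
  also have "\<dots> = (\<Sum>x\<in>{..<n} \<times> {..<n}. if x \<in> T then 1 else 0)"
    using T fin by (simp add: sum.If_cases Int_absorb1)
  also have "\<dots> = (\<Sum>u<n. \<Sum>v<n. if (u,v) \<in> T then 1 else 0)"
    by (simp add: sum.cartesian_product)
  finally show ?thesis .
qed


lemma E_sub2: "regular_graph n d E \<Longrightarrow> E \<subseteq> {..<n} \<times> {..<n}"
  using E_sub by fastforce

lemma card_E:
  assumes reg: "regular_graph n d E"
  shows "real (card E) = real n * real d"
proof -
  have "real (card E) = (\<Sum>u<n. \<Sum>v<n. if (u,v) \<in> E then 1 else 0)" by (rule card_sum[OF E_sub2[OF reg]])
  also have "\<dots> = (\<Sum>u<n. \<Sum>v<n. Ad E u v)" by (simp add: Ad_def)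
  also have "\<dots> = (\<Sum>u<n. real d)" using row_sum[OF reg] by simp
  finally show ?thesis by simp
qed

lemma nm_gh:
  fixes g h :: "nat \<Rightarrow> nat"
  assumes reg: "regular_graph n d E" and d: "d \<ge> 1" and dn: "d < n"
    and hg: "\<And>u. u < n \<Longrightarrow> g u < n" and hh: "\<And>u. u < n \<Longrightarrow> h u < n"
  shows "\<exists>D. (\<forall>s. stat_dist (map_pmf (\<lambda>(l, r). graph_dec E (g l) (h r)) (graph_enc n E s)) (map_pmf (nm_sim s) D)
     \<le> max 0 ((\<Sum>u<n. \<Sum>v<n. Ad E (g u) (h v) * (real d / real n - Ad E u v)) / (real d * (real n - real d))))
     \<and> max 0 ((\<Sum>u<n. \<Sum>v<n. Ad E (g u) (h v) * (real d / real n - Ad E u v)) / (real d * (real n - real d))) \<le> 1"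
proof -
  have n: "n > 0" using dn by simp
  define F where "F = {x. (g (fst x), h (snd x)) \<in> E}"
  define S0 where "S0 = {0..<n} \<times> {0..<n} - E"
  have fE: "finite E" using E_sub2[OF reg] by (rule finite_subset) simp
  have fS0: "finite S0" by (simp add: S0_def)
  have cE: "real (card E) = real n * real d" by (rule card_E[OF reg])
  have neE: "E \<noteq> {}" using cE d n by auto
  have irr: "(0,0) \<notin> E" using reg unfolding regular_graph_def undirected_graph_def irrefl_def by auto
  have "(0,0) \<in> S0" using irr n unfolding S0_def by auto
  then have neS0: "S0 \<noteq> {}" by auto
  have S0sub: "S0 \<subseteq> {..<n} \<times> {..<n}" by (auto simp: S0_def)
  have feq: "(\<lambda>(l, r). graph_dec E (g l) (h r)) = (\<lambda>x. Some (x \<in> F))"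
    by (auto simp: graph_dec_def F_def)
  define Q where "Q = (\<Sum>u<n. \<Sum>v<n. Ad E (g u) (h v))"
  define P where "P = (\<Sum>u<n. \<Sum>v<n. Ad E u v * Ad E (g u) (h v))"
  have cEF: "real (card (E \<inter> F)) = P"
  proof -
    have "real (card (E \<inter> F)) = (\<Sum>u<n. \<Sum>v<n. if (u,v) \<in> E \<inter> F then 1 else 0)"
      by (rule card_sum) (use E_sub2[OF reg] in auto)
    also have "\<dots> = P" unfolding P_def F_def by (intro sum.cong refl) (simp add: Ad_def)
    finally show ?thesis .
  qed
  have cS0: "real (card S0) = real n * real n - real n * real d"
  proof -
    have "real (card S0) = (\<Sum>u<n. \<Sum>v<n. if (u,v) \<in> S0 then 1 else 0)" by (rule card_sum[OF S0sub])
    also have "\<dots> = (\<Sum>u<n. \<Sum>v<n. 1 - Ad E u v)" unfolding S0_def by (intro sum.cong refl) (simp add: Ad_def)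
    also have "\<dots> = (\<Sum>u<n. real n - real d)" using row_sum[OF reg] by (simp add: sum_subtractf)
    finally show ?thesis by (simp add: algebra_simps)
  qed
  have cS0F: "real (card (S0 \<inter> F)) = Q - P"
  proof -
    have "real (card (S0 \<inter> F)) = (\<Sum>u<n. \<Sum>v<n. if (u,v) \<in> S0 \<inter> F then 1 else 0)" by (rule card_sum) (use S0sub in auto)
    also have "\<dots> = (\<Sum>u<n. \<Sum>v<n. Ad E (g u) (h v) - Ad E u v * Ad E (g u) (h v))"
      unfolding S0_def F_def by (intro sum.cong refl) (simp add: Ad_def)
    also have "\<dots> = Q - P" unfolding Q_def P_def by (simp add: sum_subtractf)
    finally show ?thesis .
  qed
  define p1 where "p1 = real (card (E \<inter> F)) / real (card E)"
  define p0 where "p0 = real (card (S0 \<inter> F)) / real (card S0)"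
  have cEpos: "real (card E) > 0" using fE neE by (simp add: card_gt_0_iff)
  have cS0pos: "real (card S0) > 0" using fS0 neS0 by (simp add: card_gt_0_iff)
  have p1r: "0 \<le> p1" "p1 \<le> 1" unfolding p1_def using cEpos fE by (auto intro!: card_mono simp: divide_le_eq_1)
  have p0r: "0 \<le> p0" "p0 \<le> 1" unfolding p0_def using cS0pos fS0 by (auto intro!: card_mono simp: divide_le_eq_1)
  define m where "m = min p0 p1"
  define D where "D = pmf_of_list [(Msg True, m), (Same, p1 - m), (Msg False, 1 - p1)]"
  have mr: "0 \<le> m" "m \<le> p1" "p1 \<le> 1" using p0r p1r by (auto simp: m_def)
  have main: "stat_dist (map_pmf (\<lambda>(l, r). graph_dec E (g l) (h r)) (graph_enc n E s)) (map_pmf (nm_sim s) D) \<le> max 0 (p0 - p1)" for s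
  proof (rule stat_dist_le)
    fix A
    have simD: "measure_pmf.prob (map_pmf (nm_sim s) D) A =
      (if nm_sim s (Msg True) \<in> A then m else 0) + (if nm_sim s Same \<in> A then p1 - m else 0) +
      (if nm_sim s (Msg False) \<in> A then 1 - p1 else 0)" unfolding D_def by (rule prob_D[OF mr])
    show "\<bar>measure_pmf.prob (map_pmf (\<lambda>(l, r). graph_dec E (g l) (h r)) (graph_enc n E s)) A -
          measure_pmf.prob (map_pmf (nm_sim s) D) A\<bar> \<le> max 0 (p0 - p1)"
    proof (cases s)
      case True
      have "measure_pmf.prob (map_pmf (\<lambda>(l, r). graph_dec E (g l) (h r)) (graph_enc n E s)) A =
        (if Some True \<in> A then p1 else 0) + (if Some False \<in> A then 1 - p1 else 0)"
      proof -
        have enc: "graph_enc n E s = pmf_of_set E" using True by (simp add: graph_enc_def)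
        have "measure_pmf.prob (map_pmf (\<lambda>(l, r). graph_dec E (g l) (h r)) (graph_enc n E s)) A
          = measure_pmf.prob (map_pmf (\<lambda>x. Some (x \<in> F)) (pmf_of_set E)) A" by (simp only: enc feq)
        also have "\<dots> = (if Some True \<in> A then real (card (E \<inter> F)) / real (card E) else 0) +
          (if Some False \<in> A then 1 - real (card (E \<inter> F)) / real (card E) else 0)" by (rule prob_map_bool[OF fE neE])
        finally show ?thesis unfolding p1_def .
      qed
      then show ?thesis using simD True by (simp add: nm_sim_def)
    next
      case False
      have "measure_pmf.prob (map_pmf (\<lambda>(l, r). graph_dec E (g l) (h r)) (graph_enc n E s)) A =
        (if Some True \<in> A then p0 else 0) + (if Some False \<in> A then 1 - p0 else 0)"
      proof -
        have enc: "graph_enc n E s = pmf_of_set S0" using False by (simp add: graph_enc_def S0_def)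
        have "measure_pmf.prob (map_pmf (\<lambda>(l, r). graph_dec E (g l) (h r)) (graph_enc n E s)) A
          = measure_pmf.prob (map_pmf (\<lambda>x. Some (x \<in> F)) (pmf_of_set S0)) A" by (simp only: enc feq)
        also have "\<dots> = (if Some True \<in> A then real (card (S0 \<inter> F)) / real (card S0) else 0) +
          (if Some False \<in> A then 1 - real (card (S0 \<inter> F)) / real (card S0) else 0)" by (rule prob_map_bool[OF fS0 neS0])
        finally show ?thesis unfolding p0_def .
      qed
      then show ?thesis using simD False by (auto simp: nm_sim_def m_def)
    qed
  qed
  have "p0 - p1 = (\<Sum>u<n. \<Sum>v<n. Ad E (g u) (h v) * (real d / real n - Ad E u v)) / (real d * (real n - real d))"
  proof -
    have G: "(\<Sum>u<n. \<Sum>v<n. Ad E (g u) (h v) * (real d / real n - Ad E u v)) = real d / real n * Q - P"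
      unfolding Q_def P_def by (simp add: algebra_simps sum_subtractf sum_distrib_left)
    have dpos: "real d > 0" using d by simp
    have nd: "real n - real d > 0" using dn by simp
    show ?thesis unfolding p0_def p1_def cS0F cEF cS0 cE G using n dpos nd
      by (simp add: field_simps)
  qed
  moreover have "max 0 (p0 - p1) \<le> 1" using p0r p1r by simp
  ultimately show ?thesis using main by metis
qed


lemma lam_half:
  assumes reg: "regular_graph n d E" and sp: "spectral_expander n E lam" and lam: "lam > 0"
    and d: "d \<ge> 1" and dn: "2 * d \<le> n"
  shows "lam \<ge> 1/2"
proof -
  have n: "n > 0" using d dn by simp
  have "card {u. (0, u) \<in> E} = d" using reg n unfolding regular_graph_def by auto
  then have "{u. (0, u) \<in> E} \<noteq> {}" using d by (metis card.empty not_one_le_zero)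
  then obtain v where e: "(0, v) \<in> E" by auto
  have v: "v < n" using E_sub[OF reg e] by simp
  define x where "x = (\<lambda>i::nat. if i = 0 then 1 else (0::real))"
  define y where "y = (\<lambda>j::nat. if j = v then 1 else (0::real))"
  have inner: "(\<Sum>j<n. x i * Ad E i j * y j) = x i * Ad E i v" for i
    using sum_delta_nat'[of v n "\<lambda>j. x i * Ad E i j"] v by (simp add: y_def)
  have s1: "(\<Sum>i<n. \<Sum>j<n. x i * Ad E i j * y j) = 1"
  proof -
    have "(\<Sum>i<n. \<Sum>j<n. x i * Ad E i j * y j) = (\<Sum>i<n. x i * Ad E i v)"
      by (simp only: inner)
    also have "\<dots> = (\<Sum>i<n. if i = 0 then Ad E 0 v else 0)" by (intro sum.cong) (auto simp: x_def)
    also have "\<dots> = Ad E 0 v" using n by simp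
    finally show ?thesis using e by (simp add: Ad_def)
  qed
  have s2: "(\<Sum>i<n. x i) = 1" "(\<Sum>j<n. y j) = 1" "(\<Sum>i<n. (x i)^2) = 1" "(\<Sum>j<n. (y j)^2) = 1"
  proof -
    have xx: "(x i)^2 = x i" for i by (simp add: x_def)
    have yy: "(y i)^2 = y i" for i by (simp add: y_def)
    have a: "(\<Sum>i<n. x i) = 1" using n by (simp add: x_def)
    have b: "(\<Sum>j<n. y j) = 1" using v by (simp add: y_def)
    show "(\<Sum>i<n. x i) = 1" "(\<Sum>j<n. y j) = 1" "(\<Sum>i<n. (x i)^2) = 1" "(\<Sum>j<n. (y j)^2) = 1"
      using a b by (simp_all only: xx yy)
  qed
  have "\<bar>1 - real d / real n\<bar> \<le> lam"
    using mixing[OF reg sp _ n, where x=x and y=y] lam s1 s2 by simp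
  moreover have "real d / real n \<le> 1/2" using dn n by (simp add: field_simps)
  ultimately show ?thesis by linarith
qed

lemma arith_main:
  fixes c L lam dd nn :: real
  assumes c: "c > 0" and d: "dd \<ge> 2" and lam: "lam \<ge> 1/2" and n: "nn > 0" and L: "L \<ge> 1/2"
    and hyp: "c * dd ^ 3 * L \<le> nn * lam"
  shows "2 * (dd^2 + dd^3 / lam + 2 * (lam * nn * sqrt (2 * lam))) / (dd * nn) \<le> (20 / c + 6) * (lam * sqrt lam) / dd"
proof -
  define mu where "mu = sqrt lam"
  have mu: "mu \<ge> 1/2"
  proof -
    have "sqrt (1/4) \<le> sqrt lam" using lam by (intro real_sqrt_le_mono) simp
    moreover have "sqrt (1/4::real) = 1/2" by (simp add: real_sqrt_divide)
    ultimately show ?thesis by (simp add: mu_def)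
  qed
  have lp: "lam > 0" using lam by simp
  have dp: "dd > 0" using d by simp
  have dL: "dd * L \<ge> 1"
  proof -
    have "2 * (1/2) \<le> dd * L" by (rule mult_mono) (use d L in auto)
    then show ?thesis by simp
  qed
  have eq: "2 * (dd^2 + dd^3 / lam + 2 * (lam * nn * sqrt (2 * lam))) / (dd * nn)
     = 2 * dd / nn + 2 * dd^2 / (lam * nn) + 4 * sqrt 2 * (lam * mu) / dd"
  proof -
    have e0: "2 * (dd^2 + dd^3 / lam + 2 * (lam * nn * sqrt (2 * lam))) / (dd * nn)
      = 2 * dd^2 / (dd * nn) + 2 * (dd^3 / lam) / (dd * nn) + 2 * (2 * (lam * nn * sqrt (2 * lam))) / (dd * nn)"
      by (simp add: add_divide_distrib distrib_left)
    have e1: "2 * dd^2 / (dd * nn) = 2 * dd / nn" using dp by (simp add: power2_eq_square)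
    have e2: "2 * (dd^3 / lam) / (dd * nn) = 2 * dd^2 / (lam * nn)"
      using dp by (simp add: power2_eq_square power3_eq_cube)
    have e3: "2 * (2 * (lam * nn * sqrt (2 * lam))) / (dd * nn) = 4 * sqrt 2 * (lam * mu) / dd"
      using n by (simp add: mu_def real_sqrt_mult)
    show ?thesis using e0 e1 e2 e3 by simp
  qed
  have T1: "2 * dd / nn \<le> 4 / c * (lam * mu) / dd"
  proof -
    have "2 * c * dd^2 \<le> 4 * mu * (c * dd^3 * L)"
    proof -
      have "1 * 1 \<le> (2 * mu) * (dd * L)" by (rule mult_mono) (use mu dL in auto)
      then have "2 * mu * (dd * L) \<ge> 1" by simp
      then have "c * dd^2 * 1 \<le> c * dd^2 * (2 * mu * (dd * L))" using c dp by (intro mult_left_mono) auto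
      then show ?thesis by (simp add: power2_eq_square power3_eq_cube algebra_simps)
    qed
    also have "\<dots> \<le> 4 * mu * (nn * lam)" using hyp mu by (intro mult_left_mono) auto
    finally have "2 * c * dd^2 \<le> 4 * mu * (nn * lam)" .
    then show ?thesis using c dp n by (simp add: field_simps power2_eq_square)
  qed
  have T2: "2 * dd^2 / (lam * nn) \<le> 16 / c * (lam * mu) / dd"
  proof -
    have "2 * c * dd^3 \<le> 16 * lam * mu * (c * dd^3 * L)"
    proof -
      have "8 * (lam * mu * L) \<ge> 1"
      proof -
        have "(1/2) * (1/2) \<le> lam * mu" by (rule mult_mono) (use lam mu in auto)
        then have "(1/4) * (1/2) \<le> (lam * mu) * L" by (intro mult_mono) (use L in auto)
        then have "lam * mu * L \<ge> 1/8" by simp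
        then show ?thesis by simp
      qed
      then have "c * dd^3 * 1 \<le> c * dd^3 * (8 * (lam * mu * L))" using c dp by (intro mult_left_mono) auto
      then show ?thesis by (simp add: algebra_simps)
    qed
    also have "\<dots> \<le> 16 * lam * mu * (nn * lam)" using hyp mu lp by (intro mult_left_mono) auto
    finally have "2 * c * dd^3 \<le> 16 * lam * mu * (nn * lam)" .
    then show ?thesis using c dp n lp by (simp add: field_simps power2_eq_square power3_eq_cube)
  qed
  have T3: "4 * sqrt 2 * (lam * mu) / dd \<le> 6 * (lam * mu) / dd"
  proof -
    have "sqrt 2 \<le> 3/2"
    proof -
      have "sqrt 2 \<le> sqrt ((3/2)^2)" by (intro real_sqrt_le_mono) (simp add: power2_eq_square)
      then show ?thesis by simp
    qed
    moreover have "lam * mu \<ge> 0" using lp mu by simp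
    ultimately have "(4 * sqrt 2) * (lam * mu) \<le> 6 * (lam * mu)" by (intro mult_right_mono) auto
    then show ?thesis using dp by (simp add: divide_right_mono)
  qed
  have "(20 / c + 6) * (lam * mu) / dd = 4 / c * (lam * mu) / dd + 16 / c * (lam * mu) / dd + 6 * (lam * mu) / dd"
    using c dp by (simp add: field_simps)
  then show ?thesis using eq T1 T2 T3 unfolding mu_def by linarith
qed

lemma arith_triv:
  fixes c L lam dd nn :: real
  assumes c: "c > 0" and d: "dd \<ge> 2" and lam: "lam > 0" and n: "nn > 0" and L: "L \<ge> 1/2"
    and hyp: "c * dd ^ 3 * L \<le> nn * lam" and small: "nn < 2 * dd"
  shows "1 \<le> 2 / (c * sqrt c) * (lam * sqrt lam) / dd"
proof -
  have dp: "dd > 0" using d by simp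
  have "nn * lam \<le> (2 * dd) * lam" using small lam by (intro mult_right_mono) auto
  then have "c * dd^3 * L \<le> 2 * dd * lam" using hyp by simp
  then have "c * dd^2 * (2 * L) \<le> 4 * lam" using dp by (simp add: power2_eq_square power3_eq_cube algebra_simps)
  moreover have "c * dd^2 * 1 \<le> c * dd^2 * (2 * L)" using L c by (intro mult_left_mono) auto
  ultimately have l1: "c * dd^2 \<le> 4 * lam" by linarith
  have l2: "lam / dd \<ge> c * dd / 4"
  proof -
    have "c * dd * dd \<le> 4 * lam" using l1 by (simp add: power2_eq_square)
    then show ?thesis using dp by (simp add: field_simps)
  qed
  have lamd: "lam / dd \<ge> c / 2"
  proof -
    have "c * 2 \<le> c * dd" using c d by simp
    then have "c / 2 \<le> c * dd / 4" by simp
    then show ?thesis using l2 by linarith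
  qed
  have sq: "sqrt lam \<ge> sqrt c"
  proof -
    have "2 * 2 \<le> dd * dd" by (rule mult_mono) (use d in auto)
    then have "c * 4 \<le> c * dd^2" using c by (intro mult_left_mono) (auto simp: power2_eq_square)
    then have "c \<le> lam" using l1 by simp
    then show ?thesis by simp
  qed
  have cs: "sqrt c > 0" using c by simp
  have "lam * sqrt lam / dd \<ge> c / 2 * sqrt c"
  proof -
    have "lam * sqrt lam / dd = (lam / dd) * sqrt lam" by simp
    also have "\<dots> \<ge> (c / 2) * sqrt c" using lamd sq c cs lam dp by (intro mult_mono) auto
    finally show ?thesis .
  qed
  then have "2 / (c * sqrt c) * (lam * sqrt lam / dd) \<ge> 2 / (c * sqrt c) * (c / 2 * sqrt c)"
    using c cs by (intro mult_left_mono) auto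
  moreover have "2 / (c * sqrt c) * (c / 2 * sqrt c) = 1" using c cs by (simp add: field_simps)
  ultimately show ?thesis by simp
qed


lemma bound_eps:
  fixes G c lam :: real
  assumes reg: "regular_graph n d E" and sp: "spectral_expander n E lam" and lam: "lam > 0"
    and c: "c > 0" and d2: "2 \<le> d" and dn: "d < n" and hyp: "c * real d ^ 3 * ln (real d) / lam \<le> real n"
    and Gle: "2 * d \<le> n \<Longrightarrow> G \<le> real d ^ 2 + real d ^ 3 / lam + 2 * (lam * real n * sqrt (2 * lam))"
    and X1: "max 0 (G / (real d * (real n - real d))) \<le> 1"
  shows "max 0 (G / (real d * (real n - real d))) \<le> (20 / c + 6 + 2 / (c * sqrt c)) * lam powr (3/2) / real d"
proof -
  have dr: "real d \<ge> 2" using d2 by simp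
  have dp: "real d > 0" using d2 by simp
  have np: "real n > 0" using dn by simp
  have L: "ln (real d) \<ge> 1/2" by (rule ln_ge_half[OF dr])
  have hyp': "c * real d ^ 3 * ln (real d) \<le> real n * lam" using hyp lam by (simp add: divide_le_eq)
  have pw: "lam powr (3/2) = lam * sqrt lam" by (rule powr32[OF lam])
  have ls: "lam * sqrt lam / real d \<ge> 0" using lam dp by simp
  have cs: "c * sqrt c > 0" using c by simp
  have extra: "2 / (c * sqrt c) * (lam * sqrt lam) / real d \<ge> 0"
    using cs lam dp by (intro divide_nonneg_pos mult_nonneg_nonneg) auto
  have Cform: "(20 / c + 6 + 2 / (c * sqrt c)) * (lam * sqrt lam) / real d
     = (20 / c + 6) * (lam * sqrt lam) / real d + 2 / (c * sqrt c) * (lam * sqrt lam) / real d"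
    by (simp add: distrib_right add_divide_distrib)
  show ?thesis
  proof (cases "2 * d \<le> n")
    case True
    have lh: "lam \<ge> 1/2" by (rule lam_half[OF reg sp lam _ True]) (use d2 in simp)
    define B where "B = real d ^ 2 + real d ^ 3 / lam + 2 * (lam * real n * sqrt (2 * lam))"
    have GB: "G \<le> B" using Gle[OF True] by (simp add: B_def)
    have B0: "B \<ge> 0" using lam by (simp add: B_def)
    have nd2: "real n - real d \<ge> real n / 2" using True by simp
    have step: "max 0 (G / (real d * (real n - real d))) \<le> 2 * B / (real d * real n)"
    proof (cases "G \<le> 0")
      case True
      then have "G / (real d * (real n - real d)) \<le> 0" using dp dn by (simp add: divide_nonpos_pos)
      then show ?thesis using B0 dp np by simp
    next
      case False
      have pos: "real d * (real n / 2) > 0" using dp np by simp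
      have "G / (real d * (real n - real d)) \<le> B / (real d * (real n - real d))"
        using GB dp dn by (intro divide_right_mono) auto
      also have "\<dots> \<le> B / (real d * (real n / 2))"
        using B0 pos nd2 dp by (intro divide_left_mono mult_left_mono) auto
      also have "\<dots> = 2 * B / (real d * real n)" by simp
      finally show ?thesis using B0 dp np by simp
    qed
    also have "\<dots> \<le> (20 / c + 6) * (lam * sqrt lam) / real d"
      unfolding B_def by (rule arith_main[OF c dr lh np L hyp'])
    finally show ?thesis unfolding pw Cform using extra by linarith
  next
    case False
    then have small: "real n < 2 * real d" by simp
    have "1 \<le> 2 / (c * sqrt c) * (lam * sqrt lam) / real d"
      by (rule arith_triv[OF c dr lam np L hyp' small])
    moreover have "(20 / c + 6) * (lam * sqrt lam) / real d \<ge> 0"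
      using c lam dp by (intro divide_nonneg_pos mult_nonneg_nonneg) auto
    ultimately show ?thesis unfolding pw Cform using X1 by linarith
  qed
qed

theorem theoremB1:
  "\<forall>c::real. c > 0 \<longrightarrow> (\<exists>C::real. C > 0 \<and>
     (\<forall>(n::nat) (d::nat) (E::(nat \<times> nat) set) (lam::real).
        regular_graph n d E \<and> 2 \<le> d \<and> d < n \<and> spectral_expander n E lam \<and> lam > 0 \<and>
        real n \<ge> c * real d ^ 3 * ln (real d) / lam
        \<longrightarrow> (\<exists>eps. eps \<le> C * lam powr (3/2) / real d \<and>
               split_state_nm (graph_enc n E) (graph_dec E) {0..<n} {0..<n} eps)))"
proof (intro allI impI)
  fix c :: real assume c: "c > 0"
  define C where "C = 20 / c + 6 + 2 / (c * sqrt c)"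
  have Cpos: "C > 0" using c by (simp add: C_def add_pos_pos)
  show "\<exists>C::real. C > 0 \<and>
     (\<forall>(n::nat) (d::nat) (E::(nat \<times> nat) set) (lam::real).
        regular_graph n d E \<and> 2 \<le> d \<and> d < n \<and> spectral_expander n E lam \<and> lam > 0 \<and>
        real n \<ge> c * real d ^ 3 * ln (real d) / lam
        \<longrightarrow> (\<exists>eps. eps \<le> C * lam powr (3/2) / real d \<and>
               split_state_nm (graph_enc n E) (graph_dec E) {0..<n} {0..<n} eps))"
  proof (rule exI[where x=C], intro conjI allI impI)
    show "C > 0" by (rule Cpos)
    fix n d :: nat and E :: "(nat \<times> nat) set" and lam :: real
    assume H: "regular_graph n d E \<and> 2 \<le> d \<and> d < n \<and> spectral_expander n E lam \<and> lam > 0 \<and>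
        real n \<ge> c * real d ^ 3 * ln (real d) / lam"
    then have reg: "regular_graph n d E" and d2: "2 \<le> d" and dn: "d < n" and sp: "spectral_expander n E lam"
      and lam: "lam > 0" and hyp: "c * real d ^ 3 * ln (real d) / lam \<le> real n" by auto
    have n: "n > 0" using dn by simp
    have Esub: "E \<subseteq> {0..<n} \<times> {0..<n}" using E_sub2[OF reg] by (auto simp: atLeast0LessThan)
    have fE: "finite E" using Esub by (rule finite_subset) simp
    have cE: "real (card E) = real n * real d" by (rule card_E[OF reg])
    have neE: "E \<noteq> {}" using cE d2 n by auto
    have irr: "(0,0) \<notin> E" using reg unfolding regular_graph_def undirected_graph_def irrefl_def by auto
    have "(0,0) \<in> {0..<n} \<times> {0..<n} - E" using irr n by simp
    then have neS0: "{0..<n} \<times> {0..<n} - E \<noteq> {}" by (metis empty_iff)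
    have fS0: "finite ({0..<n} \<times> {0..<n} - E)" by simp
    show "\<exists>eps. eps \<le> C * lam powr (3/2) / real d \<and>
               split_state_nm (graph_enc n E) (graph_dec E) {0..<n} {0..<n} eps"
    proof (intro exI conjI)
      show "C * lam powr (3/2) / real d \<le> C * lam powr (3/2) / real d" by simp
      show "split_state_nm (graph_enc n E) (graph_dec E) {0..<n} {0..<n} (C * lam powr (3/2) / real d)"
        unfolding split_state_nm_def
      proof (intro conjI allI ballI)
        fix s :: bool
        show "set_pmf (graph_enc n E s) \<subseteq> {0..<n} \<times> {0..<n}"
          using Esub fE neE fS0 neS0 by (auto simp: graph_enc_def)
      next
        fix s :: bool
        show "measure_pmf.prob (graph_enc n E s) {(l, r). graph_dec E l r = Some s} = 1"
        proof (cases s)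
          case True
          have "{(l, r). graph_dec E l r = Some s} = E" using True by (auto simp: graph_dec_def)
          then show ?thesis using True fE neE by (simp add: graph_enc_def measure_pmf_of_set)
        next
          case False
          have "({0..<n} \<times> {0..<n} - E) \<inter> {(l, r). graph_dec E l r = Some s} = {0..<n} \<times> {0..<n} - E"
            using False by (auto simp: graph_dec_def)
          then show ?thesis using False fS0 neS0 by (simp add: graph_enc_def measure_pmf_of_set)
        qed
      next
        fix g h :: "nat \<Rightarrow> nat"
        assume g: "g \<in> {0..<n} \<rightarrow> {0..<n}" and h: "h \<in> {0..<n} \<rightarrow> {0..<n}"
        have hg: "\<And>u. u < n \<Longrightarrow> g u < n" using g by auto
        have hh: "\<And>u. u < n \<Longrightarrow> h u < n" using h by auto
        define G where "G = (\<Sum>u<n. \<Sum>v<n. Ad E (g u) (h v) * (real d / real n - Ad E u v))"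
        obtain D where D: "\<forall>s. stat_dist (map_pmf (\<lambda>(l, r). graph_dec E (g l) (h r)) (graph_enc n E s)) (map_pmf (nm_sim s) D)
             \<le> max 0 (G / (real d * (real n - real d)))"
          and X1: "max 0 (G / (real d * (real n - real d))) \<le> 1"
          using nm_gh[OF reg _ dn hg hh] d2 unfolding G_def by force
        have Gle: "G \<le> real d ^ 2 + real d ^ 3 / lam + 2 * (lam * real n * sqrt (2 * lam))"
        proof -
          have d0: "d > 0" using d2 by simp
          show ?thesis unfolding G_def by (rule total_bound[OF reg sp lam n hg hh d0])
        qed
        have "max 0 (G / (real d * (real n - real d))) \<le> C * lam powr (3/2) / real d"
          unfolding C_def by (rule bound_eps[OF reg sp lam c d2 dn hyp Gle X1])
        then show "\<exists>D. \<forall>s. stat_dist (map_pmf (\<lambda>(l, r). graph_dec E (g l) (h r)) (graph_enc n E s)) (map_pmf (nm_sim s) D)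
            \<le> C * lam powr (3/2) / real d"
          using D by (meson order_trans)
      qed
    qed
  qed
qed


end
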